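(* Let $n\le 3$ and let $\mu$ be a valuated matroid of rank $n$ on $[2n]$. Then $L_\mu$ is isotropic if and only if $\mu\in\mathrm{SpDr}(n,2n)$.
   Context: $[2n]=\{1,\dots,n,\bar1,\dots,\bar n\}$ with $\bar{\bar i}=i$; $Si:=S\cup\{i\}$. $\mathbb{T}=\mathbb{R}\cup\{\infty\}$. A valuated matroid of rank $k$ on $[2n]$ is $\mu\in(\mathbb{T}^{\binom{[2n]}{k}}\setminus\{\infty\})/\mathbb{R}(1,\dots,1)$ such that for all $S\in\binom{[2n]}{k-1}$, $T\in\binom{[2n]}{k+1}$, the minimum of $\mu_{T\setminus i}+\mu_{Si}$ over $i\in T\setminus S$ is attained at least twice or is $\infty$. $L_\mu=\{x\in\mathbb{T}^{2n}:\forall T\in\binom{[2n]}{k+1},\ \min_{i\in T}(\mu_{T\setminus i}+x_i)\text{ attained at least twice or }\infty\}$. Points $x,y$ are orthogonal if $\min_{i\in[2n]}(x_i+y_{\bar i})$ is attained at least twice; $L$ is isotropic if any two of its points are orthogonal. $\mathrm{SpDr}(k,2n)$ is the set of valuated matroids $\mu$ of rank $k$ on $[2n]$ such that for every $S\in\binom{[2n]}{k-2}$ the minimum of $\mu_{S\cup\{i,\bar i\}}$ over $i\in[n]$ with $\{i,\bar i\}\cap S=\emptyset$ is attained at least twice (or is $\infty$). *)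

theory Defs
  imports Main "HOL-Library.Extended_Real"
begin

(* Ground set [2n] encoded as {0..<2n}: i < n plays the role of i+1, and
   n+i plays the role of \bar{(i+1)}. Tropical numbers T = R \<union> {\<infinity>} are
   ereals different from -\<infinity>. *)

definition ground :: "nat \<Rightarrow> nat set" where
  "ground n = {0..<2*n}"

definition bar :: "nat \<Rightarrow> nat \<Rightarrow> nat" where
  "bar n i = (if i < n then i + n else i - n)"

definition trop_min2 :: "'a set \<Rightarrow> ('a \<Rightarrow> ereal) \<Rightarrow> bool" where
  "trop_min2 I f \<longleftrightarrow>
     (\<forall>i\<in>I. f i = \<infinity>) \<or>
     (\<exists>i\<in>I. \<exists>j\<in>I. i \<noteq> j \<and> f i = f j \<and> (\<forall>l\<in>I. f i \<le> f l))"

(* valuated matroid of rank k on [2n]; mu is a representative of the class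
   modulo R(1,...,1), only its values on k-subsets of [2n] matter *)
definition valuated_matroid :: "nat \<Rightarrow> nat \<Rightarrow> (nat set \<Rightarrow> ereal) \<Rightarrow> bool" where
  "valuated_matroid n k \<mu> \<longleftrightarrow>
     (\<forall>B. B \<subseteq> ground n \<and> card B = k \<longrightarrow> \<mu> B \<noteq> -\<infinity>) \<and>
     (\<exists>B. B \<subseteq> ground n \<and> card B = k \<and> \<mu> B \<noteq> \<infinity>) \<and>
     (\<forall>S T. S \<subseteq> ground n \<and> card S + 1 = k \<and> T \<subseteq> ground n \<and> card T = k + 1 \<longrightarrow>
        trop_min2 (T - S) (\<lambda>i. \<mu> (T - {i}) + \<mu> (insert i S)))"

(* tropical linear space L_mu \<subseteq> T^{2n} (points are functions, only the
   values on [2n] matter) *)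
definition Lmu :: "nat \<Rightarrow> nat \<Rightarrow> (nat set \<Rightarrow> ereal) \<Rightarrow> (nat \<Rightarrow> ereal) set" where
  "Lmu n k \<mu> = {x. (\<forall>i\<in>ground n. x i \<noteq> -\<infinity>) \<and>
     (\<forall>T. T \<subseteq> ground n \<and> card T = k + 1 \<longrightarrow> trop_min2 T (\<lambda>i. \<mu> (T - {i}) + x i))}"

definition orthogonal :: "nat \<Rightarrow> (nat \<Rightarrow> ereal) \<Rightarrow> (nat \<Rightarrow> ereal) \<Rightarrow> bool" where
  "orthogonal n x y \<longleftrightarrow> trop_min2 (ground n) (\<lambda>i. x i + y (bar n i))"

definition isotropic :: "nat \<Rightarrow> (nat \<Rightarrow> ereal) set \<Rightarrow> bool" where
  "isotropic n L \<longleftrightarrow> (\<forall>x\<in>L. \<forall>y\<in>L. orthogonal n x y)"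

definition SpDr :: "nat \<Rightarrow> nat \<Rightarrow> (nat set \<Rightarrow> ereal) set" where
  "SpDr k n = {\<mu>. valuated_matroid n k \<mu> \<and>
     (\<forall>S. S \<subseteq> ground n \<and> card S + 2 = k \<longrightarrow>
        trop_min2 {i. i < n \<and> i \<notin> S \<and> bar n i \<notin> S} (\<lambda>i. \<mu> (S \<union> {i, bar n i})))}"

end

theory Submission
  imports Defs
begin

definition cc :: "(nat set \<Rightarrow> ereal) \<Rightarrow> nat set \<Rightarrow> nat \<Rightarrow> ereal" where
  "cc \<mu> S j = (if j \<in> S then \<infinity> else \<mu> (insert j S))"

lemma bar_ground: "i \<in> ground n \<Longrightarrow> bar n i \<in> ground n"
  by (auto simp: ground_def bar_def)
lemma bar_bar: "i \<in> ground n \<Longrightarrow> bar n (bar n i) = i"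
  by (auto simp: ground_def bar_def)
lemma bar_neq: "i \<in> ground n \<Longrightarrow> bar n i \<noteq> i"
  by (auto simp: ground_def bar_def)
lemma bar_inj: "inj_on (bar n) (ground n)"
  by (metis bar_bar inj_onI)
lemma finite_ground[simp]: "finite (ground n)" by (simp add: ground_def)
lemma card_ground[simp]: "card (ground n) = 2*n" by (simp add: ground_def)
lemma fin_sub: "A \<subseteq> ground n \<Longrightarrow> finite A"
  by (rule finite_subset[OF _ finite_ground])

lemma vm_nm: "valuated_matroid n k \<mu> \<Longrightarrow> B \<subseteq> ground n \<Longrightarrow> card B = k \<Longrightarrow> \<mu> B \<noteq> -\<infinity>"
  unfolding valuated_matroid_def by blast
lemma vm_pl: "valuated_matroid n k \<mu> \<Longrightarrow> S \<subseteq> ground n \<Longrightarrow> card S + 1 = k \<Longrightarrow> T \<subseteq> ground n \<Longrightarrow> card T = k + 1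
  \<Longrightarrow> trop_min2 (T - S) (\<lambda>i. \<mu> (T - {i}) + \<mu> (insert i S))"
  unfolding valuated_matroid_def by blast
lemma vm_ex: "valuated_matroid n k \<mu> \<Longrightarrow> \<exists>B. B \<subseteq> ground n \<and> card B = k \<and> \<mu> B \<noteq> \<infinity>"
  unfolding valuated_matroid_def by blast

lemma tm_ext:
  assumes "trop_min2 A' g" "A' \<subseteq> A" "\<forall>j\<in>A'. f j = g j" "\<forall>j\<in>A-A'. f j = \<infinity>"
  shows "trop_min2 A f"
proof -
  { assume "\<forall>i\<in>A'. g i = \<infinity>"
    then have ?thesis using assms unfolding trop_min2_def by (metis DiffI) }
  moreover
  { assume "\<exists>i\<in>A'. \<exists>j\<in>A'. i \<noteq> j \<and> g i = g j \<and> (\<forall>l\<in>A'. g i \<le> g l)"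
    then obtain i j where "i\<in>A'" "j\<in>A'" "i \<noteq> j" "g i = g j" "\<forall>l\<in>A'. g i \<le> g l" by blast
    moreover have "\<forall>l\<in>A. f i \<le> f l"
    proof
      fix l assume l: "l \<in> A"
      show "f i \<le> f l"
      proof (cases "l \<in> A'")
        case True then show ?thesis using \<open>\<forall>l\<in>A'. g i \<le> g l\<close> \<open>i \<in> A'\<close> assms(3) by auto
      next
        case False then have "f l = \<infinity>" using assms(4) l by blast
        then show ?thesis by simp
      qed
    qed
    ultimately have ?thesis using assms(2,3) unfolding trop_min2_def
      apply (intro disjI2)
      apply (rule bexI[of _ i])
       apply (rule bexI[of _ j])
      by auto }
  ultimately show ?thesis using assms(1) unfolding trop_min2_def by blast
qed

lemma tm_unique:
  assumes "trop_min2 A h" "i0\<in>A" "h i0 \<noteq> \<infinity>" "\<forall>j\<in>A-{i0}. h i0 < h j"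
  shows False
proof -
  have "\<not> (\<forall>i\<in>A. h i = \<infinity>)" using assms(2,3) by blast
  then obtain a b where ab: "a\<in>A" "b\<in>A" "a\<noteq>b" "h a = h b" "\<forall>l\<in>A. h a \<le> h l"
    using assms(1) unfolding trop_min2_def by blast
  have "a = i0"
  proof (rule ccontr)
    assume "a \<noteq> i0" then have "h i0 < h a" using assms(4) ab(1) by blast
    with ab(5) assms(2) show False by (auto simp: not_le[symmetric])
  qed
  moreover have "b = i0"
  proof (rule ccontr)
    assume "b \<noteq> i0" then have "h i0 < h b" using assms(4) ab(2) by blast
    with ab(4,5) assms(2) show False by (auto simp: not_le[symmetric])
  qed
  ultimately show False using ab(3) by simp
qed

lemma tm_two:
  assumes "trop_min2 A f" "p\<in>A" "q\<in>A" "p\<noteq>q" "\<forall>j\<in>A-{p,q}. f j = \<infinity>"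
  shows "f p = f q"
proof (cases "f p = \<infinity> \<and> f q = \<infinity>")
  case True then show ?thesis by simp
next
  case False
  then have "\<not> (\<forall>i\<in>A. f i = \<infinity>)" using assms(2,3) by blast
  then obtain i j where ij: "i\<in>A" "j\<in>A" "i \<noteq> j" "f i = f j" "\<forall>l\<in>A. f i \<le> f l"
    using assms(1) unfolding trop_min2_def by blast
  have fi: "f i \<noteq> \<infinity>"
  proof
    assume "f i = \<infinity>"
    then have "f p = \<infinity>" "f q = \<infinity>" using ij(5) assms(2,3) by auto
    with False show False by simp
  qed
  have "i \<in> {p,q}"
  proof (rule ccontr)
    assume "i \<notin> {p,q}" then have "f i = \<infinity>" using assms(5) ij(1) by blast
    with fi show False by simp
  qed
  moreover have "j \<in> {p,q}"
  proof (rule ccontr)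
    assume "j \<notin> {p,q}" then have "f j = \<infinity>" using assms(5) ij(2) by blast
    with fi ij(4) show False by simp
  qed
  ultimately have "(i = p \<and> j = q) \<or> (i = q \<and> j = p)" using ij(3) by blast
  then show ?thesis using ij(4) by (elim disjE) auto
qed

lemma tm_one:
  assumes "trop_min2 A f" "p\<in>A" "\<forall>j\<in>A-{p}. f j = \<infinity>"
  shows "f p = \<infinity>"
proof (rule ccontr)
  assume np: "f p \<noteq> \<infinity>"
  have "\<forall>j\<in>A-{p}. f p < f j" using assms(3) np by (simp add: less_le)
  then show False using tm_unique[OF assms(1,2) np] by blast
qed

lemma cc_nm:
  assumes vm: "valuated_matroid n k \<mu>" and S: "S \<subseteq> ground n" "card S + 1 = k" and j: "j \<in> ground n"
  shows "cc \<mu> S j \<noteq> -\<infinity>"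
proof (cases "j \<in> S")
  case True then show ?thesis by (simp add: cc_def)
next
  case False
  have "finite S" using S(1) by (rule fin_sub)
  then have "insert j S \<subseteq> ground n" "card (insert j S) = k" using S j False by auto
  then have "\<mu> (insert j S) \<noteq> -\<infinity>" using vm_nm[OF vm] by blast
  then show ?thesis using False by (simp add: cc_def)
qed

lemma cc_in_L:
  assumes vm: "valuated_matroid n k \<mu>" and S: "S \<subseteq> ground n" "card S + 1 = k"
  shows "cc \<mu> S \<in> Lmu n k \<mu>"
proof -
  have 1: "\<forall>i\<in>ground n. cc \<mu> S i \<noteq> -\<infinity>" using cc_nm[OF vm S] by blast
  have 2: "trop_min2 T (\<lambda>i. \<mu> (T - {i}) + cc \<mu> S i)"
    if T: "T \<subseteq> ground n" "card T = k + 1" for T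
  proof (rule tm_ext[where A'="T - S"])
    show "trop_min2 (T - S) (\<lambda>i. \<mu> (T - {i}) + \<mu> (insert i S))"
      by (rule vm_pl[OF vm S T])
    show "T - S \<subseteq> T" by blast
    show "\<forall>j\<in>T - S. \<mu> (T - {j}) + cc \<mu> S j = \<mu> (T - {j}) + \<mu> (insert j S)"
      unfolding cc_def by simp
    show "\<forall>j\<in>T - (T - S). \<mu> (T - {j}) + cc \<mu> S j = \<infinity>"
      unfolding cc_def by simp
  qed
  show ?thesis unfolding Lmu_def using 1 2 by simp
qed

lemma ereal_fin_le:
  fixes a b c d :: ereal
  assumes "\<bar>a\<bar> \<noteq> \<infinity>" "\<bar>b\<bar> \<noteq> \<infinity>" "\<bar>c\<bar> \<noteq> \<infinity>" "\<bar>d\<bar> \<noteq> \<infinity>" "a + b \<le> c + d"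
  shows "real_of_ereal a + real_of_ereal b \<le> real_of_ereal c + real_of_ereal d"
  using assms by (cases a; cases b; cases c; cases d) auto

lemma gen:
  assumes vm: "valuated_matroid n k \<mu>" and x: "x \<in> Lmu n k \<mu>"
    and i: "i \<in> ground n" "x i \<noteq> \<infinity>"
  shows "\<exists>S l. S \<subseteq> ground n \<and> card S + 1 = k \<and> i \<notin> S \<and>
     (\<forall>j\<in>ground n. x j \<le> ereal l + cc \<mu> S j) \<and> x i = ereal l + cc \<mu> S i"
proof -
  define G where "G = {j \<in> ground n. x j = \<infinity>}"
  define ind where "ind J \<longleftrightarrow> (\<exists>B. B \<subseteq> ground n \<and> card B = k \<and> J \<subseteq> B \<and> \<mu> B \<noteq> \<infinity>)" for J
  have xm: "\<forall>j\<in>ground n. x j \<noteq> -\<infinity>" using x unfolding Lmu_def by blast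
  have mm: "\<mu> B \<noteq> -\<infinity>" if "B \<subseteq> ground n" "card B = k" for B
    by (rule vm_nm[OF vm that])
  have xL: "trop_min2 T (\<lambda>j. \<mu> (T - {j}) + x j)" if "T \<subseteq> ground n" "card T = k + 1" for T
    using x that unfolding Lmu_def by blast
  have "ind {}" using vm_ex[OF vm] unfolding ind_def by blast
  have Gg: "G \<subseteq> ground n" unfolding G_def by auto
  have bnd: "\<forall>J. J \<subseteq> G \<and> ind J \<longrightarrow> card J < 2*n+1"
  proof (intro allI impI)
    fix J assume "J \<subseteq> G \<and> ind J"
    then have "card J \<le> card (ground n)" using Gg by (meson card_mono finite_ground subset_trans)
    then show "card J < 2*n+1" by simp
  qed
  have "\<exists>I. (I \<subseteq> G \<and> ind I) \<and> (\<forall>J. J \<subseteq> G \<and> ind J \<longrightarrow> card J \<le> card I)"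
    by (rule Lattices_Big.ex_has_greatest_nat[of "\<lambda>J. J \<subseteq> G \<and> ind J" "{}" card "2*n+1"])
      (use \<open>ind {}\<close> bnd in simp_all)
  then obtain I where Ip: "(I \<subseteq> G \<and> ind I) \<and> (\<forall>J. J \<subseteq> G \<and> ind J \<longrightarrow> card J \<le> card I)"
    by (rule exE)
  have I: "I \<subseteq> G" "ind I" using Ip by (rule conjunct1[THEN conjunct1], rule conjunct1[THEN conjunct2])
  have Imax: "\<forall>J. J \<subseteq> G \<and> ind J \<longrightarrow> card J \<le> card I" using Ip by (rule conjunct2)
  have fI: "finite I" using I(1) Gg by (intro fin_sub) (rule subset_trans)
  have iI: "i \<notin> I" using I(1) i unfolding G_def by auto
  define Fam where "Fam = {B. B \<subseteq> ground n \<and> card B = k \<and> I \<subseteq> B \<and> \<mu> B \<noteq> \<infinity>}"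
  have BG: "x j \<noteq> \<infinity>" if "B \<in> Fam" "j \<in> B" "j \<notin> I" for B j
  proof
    assume xj: "x j = \<infinity>"
    have jg: "j \<in> ground n" using that unfolding Fam_def by auto
    have "insert j I \<subseteq> G" using I(1) xj jg unfolding G_def by auto
    moreover have "ind (insert j I)" using that unfolding Fam_def ind_def by auto
    ultimately have "card (insert j I) \<le> card I" using Imax by blast
    then show False using fI that(3) by simp
  qed
  define w where "w B = real_of_ereal (\<mu> B) - (\<Sum>j\<in>B-I. real_of_ereal (x j))" for B
  have fFam: "finite Fam" unfolding Fam_def
    by (rule finite_subset[of _ "Pow (ground n)"]) auto
  have neFam: "Fam \<noteq> {}" using I(2) unfolding ind_def Fam_def by auto
  obtain B0 where B0: "B0 \<in> Fam" "\<forall>B\<in>Fam. w B0 \<le> w B"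
  proof -
    have "Min (w ` Fam) \<in> w ` Fam" using fFam neFam by simp
    then obtain B0 where "B0 \<in> Fam" "w B0 = Min (w ` Fam)" by auto
    moreover have "\<forall>B\<in>Fam. Min (w ` Fam) \<le> w B" using fFam by simp
    ultimately show ?thesis using that by auto
  qed
  have fin_fam: "\<bar>\<mu> B\<bar> \<noteq> \<infinity>" if "B \<in> Fam" for B
    using that mm unfolding Fam_def by auto
  have fin_x: "\<bar>x j\<bar> \<noteq> \<infinity>" if "j \<in> ground n" "x j \<noteq> \<infinity>" for j
    using that xm by auto
  obtain B1 where B1: "B1 \<in> Fam" "i \<in> B1" "\<forall>B\<in>Fam. w B1 \<le> w B"
  proof (cases "i \<in> B0")
    case True then show ?thesis using that B0 by blast
  next
    case False
    define T where "T = insert i B0"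
    have B0g: "B0 \<subseteq> ground n" "card B0 = k" "I \<subseteq> B0" "\<mu> B0 \<noteq> \<infinity>" using B0(1) unfolding Fam_def by auto
    have fB0: "finite B0" using B0g(1) by (rule fin_sub)
    have Tg: "T \<subseteq> ground n" "card T = k + 1" using B0g i False fB0 unfolding T_def by auto
    define f where "f j = \<mu> (T - {j}) + x j" for j
    have tm: "trop_min2 T f" using xL[OF Tg] unfolding f_def by simp
    have TiB0: "T - {i} = B0" unfolding T_def using False by auto
    have fi: "\<bar>f i\<bar> \<noteq> \<infinity>" unfolding f_def TiB0 using fin_fam[OF B0(1)] fin_x[OF i] by auto
    obtain a b where ab: "a \<in> T" "b \<in> T" "a \<noteq> b" "f a = f b" "\<forall>l\<in>T. f a \<le> f l"
    proof -
      have "\<not> (\<forall>j\<in>T. f j = \<infinity>)" using fi unfolding T_def by auto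
      then show ?thesis using tm that unfolding trop_min2_def by blast
    qed
    obtain j where j: "j \<in> T" "j \<noteq> i" "f j \<le> f i"
      using ab by (metis T_def insertI1)
    have fjn: "f j \<noteq> \<infinity>" using j(3) fi by auto
    have jg: "j \<in> ground n" using j(1) Tg by auto
    have muj: "\<mu> (T - {j}) \<noteq> \<infinity>" and xj: "x j \<noteq> \<infinity>" using fjn unfolding f_def by auto
    have jB0: "j \<in> B0" using j unfolding T_def by auto
    have jI: "j \<notin> I" using xj I(1) unfolding G_def by auto
    define B' where "B' = T - {j}"
    have fB': "finite B'" using Tg(1) unfolding B'_def by (intro fin_sub) blast
    have B'F: "B' \<in> Fam" unfolding Fam_def B'_def using Tg jI B0g muj j(1) T_def
      by (auto simp: card_Diff_singleton)
    have iB': "i \<in> B'" unfolding B'_def T_def using j by auto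
    have e1: "B0 - I = insert j (B0 - I - {j})" using jB0 jI by auto
    have e2: "B' - I = insert i (B0 - I - {j})" unfolding B'_def T_def using iI j by auto
    have s1: "(\<Sum>l\<in>B0-I. real_of_ereal (x l)) = real_of_ereal (x j) + (\<Sum>l\<in>B0-I-{j}. real_of_ereal (x l))"
      by (subst e1, rule sum.insert) (use fB0 in auto)
    have s2: "(\<Sum>l\<in>B'-I. real_of_ereal (x l)) = real_of_ereal (x i) + (\<Sum>l\<in>B0-I-{j}. real_of_ereal (x l))"
      by (subst e2, rule sum.insert) (use fB0 False in auto)
    have "real_of_ereal (\<mu> B') + real_of_ereal (x j) \<le> real_of_ereal (\<mu> B0) + real_of_ereal (x i)"
      apply (rule ereal_fin_le)
      using fin_fam[OF B'F] fin_x[OF jg xj] fin_fam[OF B0(1)] fin_x[OF i] j(3) TiB0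
      unfolding f_def B'_def by auto
    then have "w B' \<le> w B0" unfolding w_def using s1 s2 by simp
    then show ?thesis using that B'F iB' B0(2) by fastforce
  qed
  define S where "S = B1 - {i}"
  define l where "l = real_of_ereal (x i) - real_of_ereal (\<mu> B1)"
  have B1g: "B1 \<subseteq> ground n" "card B1 = k" "I \<subseteq> B1" "\<mu> B1 \<noteq> \<infinity>" using B1(1) unfolding Fam_def by auto
  have fB1: "finite B1" using B1g(1) by (rule fin_sub)
  have iS: "insert i S = B1" "i \<notin> S" using B1(2) unfolding S_def by auto
  have Sg: "S \<subseteq> ground n" "card S + 1 = k"
  proof -
    have "card B1 > 0" using B1(2) fB1 card_gt_0_iff by blast
    then show "S \<subseteq> ground n" "card S + 1 = k"
      using B1g B1(2) fB1 unfolding S_def by (auto simp: card_Diff_singleton)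
  qed
  have fS: "finite S" using fB1 unfolding S_def by auto
  have IS: "I \<subseteq> S" using B1g(3) iI unfolding S_def by auto
  have ccI: "cc \<mu> S i = \<mu> B1" unfolding cc_def using iS by simp
  have xi: "x i = ereal l + cc \<mu> S i"
    unfolding ccI l_def using fin_fam[OF B1(1)] fin_x[OF i] by (cases "x i"; cases "\<mu> B1") auto
  have "x j \<le> ereal l + cc \<mu> S j" if jg: "j \<in> ground n" for j
  proof (cases "j \<in> S")
    case True then show ?thesis by (simp add: cc_def)
  next
    case jS: False
    show ?thesis
    proof (cases "j = i")
      case True then show ?thesis using xi by simp
    next
      case jni: False
      then have jB1: "j \<notin> B1" using jS unfolding S_def by auto
      show ?thesis
      proof (cases "\<mu> (insert j S) = \<infinity>")
        case True then show ?thesis using jS by (simp add: cc_def)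
      next
        case False
        define B'' where "B'' = insert j S"
        have B''F: "B'' \<in> Fam" unfolding Fam_def B''_def using Sg jg IS False jS fS by auto
        have jI: "j \<notin> I" using jB1 B1g(3) by auto
        have xj: "x j \<noteq> \<infinity>" using BG[OF B''F _ jI] unfolding B''_def by auto
        have e1: "B'' - I = insert j (S - I)" unfolding B''_def using jI by auto
        have e2: "B1 - I = insert i (S - I)" using iS iI by auto
        have s1: "(\<Sum>l\<in>B''-I. real_of_ereal (x l)) = real_of_ereal (x j) + (\<Sum>l\<in>S-I. real_of_ereal (x l))"
          by (subst e1, rule sum.insert) (use fS jS in auto)
        have s2: "(\<Sum>l\<in>B1-I. real_of_ereal (x l)) = real_of_ereal (x i) + (\<Sum>l\<in>S-I. real_of_ereal (x l))"
          by (subst e2, rule sum.insert) (use fS iS in auto)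
        have "w B1 \<le> w B''" using B1(3) B''F by blast
        then have r: "real_of_ereal (x j) \<le> l + real_of_ereal (\<mu> B'')"
          unfolding w_def l_def using s1 s2 by simp
        have "cc \<mu> S j = \<mu> B''" unfolding cc_def B''_def using jS by simp
        then show ?thesis using r fin_fam[OF B''F] fin_x[OF jg xj]
          by (cases "x j"; cases "\<mu> B''") auto
      qed
    qed
  qed
  then show ?thesis using Sg iS xi by blast
qed

lemma ereal_shift_less:
  fixes a b c d :: ereal and l l' :: real
  assumes "a \<noteq> -\<infinity>" "b \<noteq> -\<infinity>" "c \<noteq> -\<infinity>" "d \<noteq> -\<infinity>"
    "(ereal l + a) + (ereal l' + b) < (ereal l + c) + (ereal l' + d)"
  shows "a + b < c + d"
  using assms by (cases a; cases b; cases c; cases d) auto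

lemma iso_of_cc:
  assumes vm: "valuated_matroid n k \<mu>"
    and orth: "\<And>S S'. S \<subseteq> ground n \<Longrightarrow> card S + 1 = k \<Longrightarrow> S' \<subseteq> ground n \<Longrightarrow> card S' + 1 = k
       \<Longrightarrow> orthogonal n (cc \<mu> S) (cc \<mu> S')"
  shows "isotropic n (Lmu n k \<mu>)"
  unfolding isotropic_def
proof (intro ballI)
  fix x y assume x: "x \<in> Lmu n k \<mu>" and y: "y \<in> Lmu n k \<mu>"
  define g where "g j = x j + y (bar n j)" for j
  have xm: "\<forall>j\<in>ground n. x j \<noteq> -\<infinity>" using x unfolding Lmu_def by blast
  have ym: "\<forall>j\<in>ground n. y j \<noteq> -\<infinity>" using y unfolding Lmu_def by blast
  show "orthogonal n x y"
  proof (rule ccontr)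
    assume no: "\<not> orthogonal n x y"
    then have tno: "\<not> trop_min2 (ground n) g" unfolding orthogonal_def g_def by simp
    then have ne: "ground n \<noteq> {}" unfolding trop_min2_def by auto
    have "Min (g ` ground n) \<in> g ` ground n" using ne by simp
    then obtain i0 where i0: "i0 \<in> ground n" "g i0 = Min (g ` ground n)" by auto
    have i0min: "\<forall>j\<in>ground n. g i0 \<le> g j" using i0 by simp
    have gi0: "g i0 \<noteq> \<infinity>"
    proof
      assume "g i0 = \<infinity>" then have "\<forall>j\<in>ground n. g j = \<infinity>" using i0min by (metis ereal_infty_less_eq(1))
      then show False using tno unfolding trop_min2_def by blast
    qed
    have strict: "\<forall>j\<in>ground n - {i0}. g i0 < g j"
    proof
      fix j assume j: "j \<in> ground n - {i0}"
      show "g i0 < g j"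
      proof (rule ccontr)
        assume "\<not> g i0 < g j" then have "g j = g i0" using i0min j by (meson DiffD1 antisym not_le)
        moreover have "i0 \<noteq> j" using j by auto
        ultimately have "trop_min2 (ground n) g" unfolding trop_min2_def
          apply (intro disjI2)
          apply (rule bexI[of _ i0])
           apply (rule bexI[of _ j])
          using i0 j i0min by auto
        then show False using tno by simp
      qed
    qed
    have bi0: "bar n i0 \<in> ground n" using bar_ground i0 by blast
    have xi0: "x i0 \<noteq> \<infinity>" and yi0: "y (bar n i0) \<noteq> \<infinity>" using gi0 unfolding g_def by auto
    obtain S l where S: "S \<subseteq> ground n" "card S + 1 = k" "i0 \<notin> S"
      "\<forall>j\<in>ground n. x j \<le> ereal l + cc \<mu> S j" "x i0 = ereal l + cc \<mu> S i0"
      using gen[OF vm x i0(1) xi0] by blast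
    obtain S' l' where S': "S' \<subseteq> ground n" "card S' + 1 = k" "bar n i0 \<notin> S'"
      "\<forall>j\<in>ground n. y j \<le> ereal l' + cc \<mu> S' j" "y (bar n i0) = ereal l' + cc \<mu> S' (bar n i0)"
      using gen[OF vm y bi0 yi0] by blast
    define h where "h j = cc \<mu> S j + cc \<mu> S' (bar n j)" for j
    have tm: "trop_min2 (ground n) h" using orth[OF S(1,2) S'(1,2)] unfolding orthogonal_def h_def by simp
    have hi0: "h i0 \<noteq> \<infinity>" using gi0 S(5) S'(5) unfolding g_def h_def by auto
    have "\<forall>j\<in>ground n - {i0}. h i0 < h j"
    proof
      fix j assume j: "j \<in> ground n - {i0}"
      have jg: "j \<in> ground n" using j by auto
      have bj: "bar n j \<in> ground n" using bar_ground jg by blast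
      have "g j \<le> (ereal l + cc \<mu> S j) + (ereal l' + cc \<mu> S' (bar n j))"
        unfolding g_def using S(4) S'(4) jg bj by (intro add_mono) auto
      moreover have "g i0 = (ereal l + cc \<mu> S i0) + (ereal l' + cc \<mu> S' (bar n i0))"
        unfolding g_def using S(5) S'(5) by simp
      ultimately have "(ereal l + cc \<mu> S i0) + (ereal l' + cc \<mu> S' (bar n i0)) <
                  (ereal l + cc \<mu> S j) + (ereal l' + cc \<mu> S' (bar n j))"
        using strict j by (metis order_less_le_trans)
      then show "h i0 < h j" unfolding h_def
        by (rule ereal_shift_less[rotated 4])
           (use cc_nm[OF vm S(1,2)] cc_nm[OF vm S'(1,2)] i0 bi0 jg bj in auto)
    qed
    then show False using tm_unique[OF tm i0(1) hi0] by simp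
  qed
qed

lemma cc_of_iso:
  assumes vm: "valuated_matroid n k \<mu>" and iso: "isotropic n (Lmu n k \<mu>)"
    and S: "S \<subseteq> ground n" "card S + 1 = k" and S': "S' \<subseteq> ground n" "card S' + 1 = k"
  shows "orthogonal n (cc \<mu> S) (cc \<mu> S')"
  using iso cc_in_L[OF vm S] cc_in_L[OF vm S'] unfolding isotropic_def by blast


lemma G2: "ground 2 = {0,1,2,3}" unfolding ground_def by auto
lemma G3: "ground 3 = {0,1,2,3,4,5}" unfolding ground_def by auto

lemma barv: "bar 2 0 = 2" "bar 2 1 = 3" "bar 2 2 = 0" "bar 2 3 = 1"
  "bar 3 0 = 3" "bar 3 1 = 4" "bar 3 2 = 5" "bar 3 3 = 0" "bar 3 4 = 1" "bar 3 5 = 2"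
  "bar 2 (Suc 0) = 3" "bar 3 (Suc 0) = 4"
  by (simp_all add: bar_def)

lemma tm_pair: "trop_min2 {a,b} f \<Longrightarrow> a \<noteq> b \<Longrightarrow> f a = f b"
  by (rule tm_two) auto

lemma tm_pair_intro: "a \<noteq> b \<Longrightarrow> f a = f b \<Longrightarrow> trop_min2 {a,b} f"
  unfolding trop_min2_def
  apply (intro disjI2)
  apply (rule bexI[of _ a])
   apply (rule bexI[of _ b])
  by auto

lemma orth_two:
  assumes "orthogonal n x y" "p \<in> ground n" "q \<in> ground n" "p \<noteq> q"
    "\<forall>j\<in>ground n - {p,q}. x j + y (bar n j) = \<infinity>"
  shows "x p + y (bar n p) = x q + y (bar n q)"
  using tm_two[of "ground n" "\<lambda>j. x j + y (bar n j)" p q] assms unfolding orthogonal_def by blast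

lemma orth_one:
  assumes "orthogonal n x y" "p \<in> ground n"
    "\<forall>j\<in>ground n - {p}. x j + y (bar n j) = \<infinity>"
  shows "x p + y (bar n p) = \<infinity>"
  using tm_one[of "ground n" "\<lambda>j. x j + y (bar n j)" p] assms unfolding orthogonal_def by blast

lemma ereal_cancel3:
  fixes A B c :: ereal
  assumes "c \<noteq> \<infinity>" "c \<noteq> -\<infinity>" "A + c = c + B"
  shows "A = B"
  using assms by (cases A; cases B; cases c) auto

lemma ereal_double_inf:
  fixes A :: ereal
  assumes "A \<noteq> -\<infinity>" "A + A = \<infinity>"
  shows "A = \<infinity>"
  using assms by (cases A) auto

lemma core_alg:
  fixes A B xa xb xc xd :: ereal
  assumes "A \<noteq> -\<infinity>" "B \<noteq> -\<infinity>" "xa \<noteq> -\<infinity>" "xb \<noteq> -\<infinity>" "xc \<noteq> -\<infinity>" "xd \<noteq> -\<infinity>"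
    and e1: "A + xa = xa + B" and e2: "A + xb = xb + B" and e3: "A + xc = xc + B" and e4: "A + xd = xd + B"
    and iA: "xa = \<infinity> \<Longrightarrow> xb = \<infinity> \<Longrightarrow> xc = \<infinity> \<Longrightarrow> xd = \<infinity> \<Longrightarrow> A + A = \<infinity>"
    and iB: "xa = \<infinity> \<Longrightarrow> xb = \<infinity> \<Longrightarrow> xc = \<infinity> \<Longrightarrow> xd = \<infinity> \<Longrightarrow> B + B = \<infinity>"
  shows "A = B"
proof (cases "xa = \<infinity> \<and> xb = \<infinity> \<and> xc = \<infinity> \<and> xd = \<infinity>")
  case True
  then have h: "xa = \<infinity>" "xb = \<infinity>" "xc = \<infinity>" "xd = \<infinity>" by simp_all
  have "A = \<infinity>" by (rule ereal_double_inf[OF assms(1) iA[OF h]])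
  moreover have "B = \<infinity>" by (rule ereal_double_inf[OF assms(2) iB[OF h]])
  ultimately show ?thesis by simp
next
  case False
  then have "xa \<noteq> \<infinity> \<or> xb \<noteq> \<infinity> \<or> xc \<noteq> \<infinity> \<or> xd \<noteq> \<infinity>" by simp
  then show ?thesis
  proof (elim disjE)
    assume h: "xa \<noteq> \<infinity>" show ?thesis by (rule ereal_cancel3[OF h assms(3) e1])
  next
    assume h: "xb \<noteq> \<infinity>" show ?thesis by (rule ereal_cancel3[OF h assms(4) e2])
  next
    assume h: "xc \<noteq> \<infinity>" show ?thesis by (rule ereal_cancel3[OF h assms(5) e3])
  next
    assume h: "xd \<noteq> \<infinity>" show ?thesis by (rule ereal_cancel3[OF h assms(6) e4])
  qed
qed

lemma lag:
  assumes B: "B \<subseteq> ground n" "card B = n" and np: "\<forall>i<n. \<not> (i \<in> B \<and> i + n \<in> B)"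
  shows "ground n - bar n ` B = B"
proof -
  define p where "p j = (if j < n then j else j - n)" for j
  have fB: "finite B" using B(1) by (rule fin_sub)
  have inj: "inj_on p B"
  proof (rule inj_onI)
    fix a b assume a: "a \<in> B" and b: "b \<in> B" and pab: "p a = p b"
    have ag: "a < 2*n" and bg: "b < 2*n" using a b B(1) by (auto simp: ground_def)
    show "a = b"
    proof (cases "a < n")
      case True
      show ?thesis
      proof (cases "b < n")
        case True then show ?thesis using pab \<open>a < n\<close> by (simp add: p_def)
      next
        case False
        then have "b = a + n" using pab \<open>a < n\<close> by (simp add: p_def)
        then show ?thesis using np a b \<open>a < n\<close> by blast
      qed
    next
      case False
      show ?thesis
      proof (cases "b < n")
        case True
        then have "a = b + n" using pab \<open>\<not> a < n\<close> by (simp add: p_def)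
        then show ?thesis using np a b \<open>b < n\<close> by blast
      next
        case False then show ?thesis using pab \<open>\<not> a < n\<close> by (simp add: p_def)
      qed
    qed
  qed
  have pBsub: "p ` B \<subseteq> {0..<n}" using B(1) by (auto simp: p_def ground_def)
  have "card (p ` B) = n" using card_image[OF inj] B(2) by simp
  then have pB: "p ` B = {0..<n}" using pBsub by (intro card_subset_eq) auto
  show ?thesis
  proof
    show "ground n - bar n ` B \<subseteq> B"
    proof
      fix j assume j: "j \<in> ground n - bar n ` B"
      show "j \<in> B"
      proof (rule ccontr)
        assume jB: "j \<notin> B"
        have jg: "j < 2*n" using j by (auto simp: ground_def)
        have "p j \<in> {0..<n}" using jg by (auto simp: p_def)
        then obtain b where b: "b \<in> B" "p b = p j" using pB by (metis imageE)
        have bg: "b < 2*n" using b B(1) by (auto simp: ground_def)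
        have "b \<noteq> j" using b jB by auto
        then have "j = bar n b" using b(2) jg bg by (auto simp: p_def bar_def split: if_splits)
        then show False using j b by auto
      qed
    qed
  next
    show "B \<subseteq> ground n - bar n ` B"
    proof
      fix j assume j: "j \<in> B"
      have "j \<notin> bar n ` B"
      proof
        assume "j \<in> bar n ` B"
        then obtain b where b: "b \<in> B" "j = bar n b" by auto
        show False
        proof (cases "b < n")
          case True then have "j = b + n" using b by (simp add: bar_def)
          then show False using np b j True by blast
        next
          case False then have "b = j + n" "j < n" using b B(1) by (auto simp: bar_def ground_def)
          then show False using np b j by blast
        qed
      qed
      then show "j \<in> ground n - bar n ` B" using j B(1) by auto
    qed
  qed
qed


lemma sp2:
  assumes vm: "valuated_matroid 2 2 \<mu>"
    and orth: "\<And>S S'. S \<subseteq> ground 2 \<Longrightarrow> card S + 1 = 2 \<Longrightarrow> S' \<subseteq> ground 2 \<Longrightarrow> card S' + 1 = 2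
       \<Longrightarrow> orthogonal 2 (cc \<mu> S) (cc \<mu> S')"
  shows "trop_min2 {i. i < 2 \<and> i \<notin> {} \<and> bar 2 i \<notin> {}} (\<lambda>i. \<mu> ({} \<union> {i, bar 2 i}))"
proof -
  have E: "\<mu> {0,2} = \<mu> {1,3}"
  proof (rule core_alg[where xa="\<mu> {0,1}" and xb="\<mu> {0,3}" and xc="\<mu> {2,1}" and xd="\<mu> {2,3}"])
    show "\<mu> {0,2} \<noteq> -\<infinity>" by (rule vm_nm[OF vm]) (simp_all add: G2)
    show "\<mu> {1,3} \<noteq> -\<infinity>" by (rule vm_nm[OF vm]) (simp_all add: G2)
    show "\<mu> {0,1} \<noteq> -\<infinity>" by (rule vm_nm[OF vm]) (simp_all add: G2)
    show "\<mu> {0,3} \<noteq> -\<infinity>" by (rule vm_nm[OF vm]) (simp_all add: G2)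
    show "\<mu> {2,1} \<noteq> -\<infinity>" by (rule vm_nm[OF vm]) (simp_all add: G2)
    show "\<mu> {2,3} \<noteq> -\<infinity>" by (rule vm_nm[OF vm]) (simp_all add: G2)
    show "\<mu> {0,2} + \<mu> {0,1} = \<mu> {0,1} + \<mu> {1,3}"
    proof -
      have "cc \<mu> {0} 2 + cc \<mu> {1} (bar 2 2) = cc \<mu> {0} 1 + cc \<mu> {1} (bar 2 1)"
        by (rule orth_two[OF orth]) (simp_all add: G2 cc_def barv insert_Diff_if)
      then show ?thesis by (simp add: cc_def barv insert_commute)
    qed
    show "\<mu> {0,2} + \<mu> {0,3} = \<mu> {0,3} + \<mu> {1,3}"
    proof -
      have "cc \<mu> {0} 2 + cc \<mu> {3} (bar 2 2) = cc \<mu> {0} 3 + cc \<mu> {3} (bar 2 3)"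
        by (rule orth_two[OF orth]) (simp_all add: G2 cc_def barv insert_Diff_if)
      then show ?thesis by (simp add: cc_def barv insert_commute)
    qed
    show "\<mu> {0,2} + \<mu> {2,1} = \<mu> {2,1} + \<mu> {1,3}"
    proof -
      have "cc \<mu> {2} 0 + cc \<mu> {1} (bar 2 0) = cc \<mu> {2} 1 + cc \<mu> {1} (bar 2 1)"
        by (rule orth_two[OF orth]) (simp_all add: G2 cc_def barv insert_Diff_if)
      then show ?thesis by (simp add: cc_def barv insert_commute)
    qed
    show "\<mu> {0,2} + \<mu> {2,3} = \<mu> {2,3} + \<mu> {1,3}"
    proof -
      have "cc \<mu> {2} 0 + cc \<mu> {3} (bar 2 0) = cc \<mu> {2} 3 + cc \<mu> {3} (bar 2 3)"
        by (rule orth_two[OF orth]) (simp_all add: G2 cc_def barv insert_Diff_if)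
      then show ?thesis by (simp add: cc_def barv insert_commute)
    qed
    show "\<mu> {0,1} = \<infinity> \<Longrightarrow> \<mu> {0,3} = \<infinity> \<Longrightarrow> \<mu> {2,1} = \<infinity> \<Longrightarrow> \<mu> {2,3} = \<infinity> \<Longrightarrow> \<mu> {0,2} + \<mu> {0,2} = \<infinity>"
    proof -
      assume h: "\<mu> {0,1} = \<infinity>" "\<mu> {0,3} = \<infinity>" "\<mu> {2,1} = \<infinity>" "\<mu> {2,3} = \<infinity>"
      have "cc \<mu> {0} 2 + cc \<mu> {2} (bar 2 2) = \<infinity>"
        by (rule orth_one[OF orth]) (use h in \<open>simp_all add: G2 cc_def barv insert_Diff_if insert_commute\<close>)
      then show ?thesis by (simp add: cc_def barv insert_commute)
    qed
    show "\<mu> {0,1} = \<infinity> \<Longrightarrow> \<mu> {0,3} = \<infinity> \<Longrightarrow> \<mu> {2,1} = \<infinity> \<Longrightarrow> \<mu> {2,3} = \<infinity> \<Longrightarrow> \<mu> {1,3} + \<mu> {1,3} = \<infinity>"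
    proof -
      assume h: "\<mu> {0,1} = \<infinity>" "\<mu> {0,3} = \<infinity>" "\<mu> {2,1} = \<infinity>" "\<mu> {2,3} = \<infinity>"
      have "cc \<mu> {1} 3 + cc \<mu> {3} (bar 2 3) = \<infinity>"
        by (rule orth_one[OF orth]) (use h in \<open>simp_all add: G2 cc_def barv insert_Diff_if insert_commute\<close>)
      then show ?thesis by (simp add: cc_def barv insert_commute)
    qed
  qed
  have Iset: "{i. i < 2 \<and> i \<notin> {} \<and> bar 2 i \<notin> {}} = {0::nat,1}" by (auto simp: bar_def)
  show ?thesis unfolding Iset by (rule tm_pair_intro) (use E in \<open>simp_all add: barv insert_commute\<close>)
qed

lemma sp3_0:
  assumes vm: "valuated_matroid 3 3 \<mu>"
    and orth: "\<And>S S'. S \<subseteq> ground 3 \<Longrightarrow> card S + 1 = 3 \<Longrightarrow> S' \<subseteq> ground 3 \<Longrightarrow> card S' + 1 = 3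
       \<Longrightarrow> orthogonal 3 (cc \<mu> S) (cc \<mu> S')"
  shows "trop_min2 {i. i < 3 \<and> i \<notin> {0} \<and> bar 3 i \<notin> {0}} (\<lambda>i. \<mu> ({0} \<union> {i, bar 3 i}))"
proof -
  have E: "\<mu> {0,1,4} = \<mu> {0,2,5}"
  proof (rule core_alg[where xa="\<mu> {0,1,2}" and xb="\<mu> {0,1,5}" and xc="\<mu> {0,4,2}" and xd="\<mu> {0,4,5}"])
    show "\<mu> {0,1,4} \<noteq> -\<infinity>" by (rule vm_nm[OF vm]) (simp_all add: G3)
    show "\<mu> {0,2,5} \<noteq> -\<infinity>" by (rule vm_nm[OF vm]) (simp_all add: G3)
    show "\<mu> {0,1,2} \<noteq> -\<infinity>" by (rule vm_nm[OF vm]) (simp_all add: G3)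
    show "\<mu> {0,1,5} \<noteq> -\<infinity>" by (rule vm_nm[OF vm]) (simp_all add: G3)
    show "\<mu> {0,4,2} \<noteq> -\<infinity>" by (rule vm_nm[OF vm]) (simp_all add: G3)
    show "\<mu> {0,4,5} \<noteq> -\<infinity>" by (rule vm_nm[OF vm]) (simp_all add: G3)
    show "\<mu> {0,1,4} + \<mu> {0,1,2} = \<mu> {0,1,2} + \<mu> {0,2,5}"
    proof -
      have "cc \<mu> {0,1} 4 + cc \<mu> {0,2} (bar 3 4) = cc \<mu> {0,1} 2 + cc \<mu> {0,2} (bar 3 2)"
        by (rule orth_two[OF orth]) (simp_all add: G3 cc_def barv insert_Diff_if)
      then show ?thesis by (simp add: cc_def barv insert_commute)
    qed
    show "\<mu> {0,1,4} + \<mu> {0,1,5} = \<mu> {0,1,5} + \<mu> {0,2,5}"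
    proof -
      have "cc \<mu> {0,1} 4 + cc \<mu> {0,5} (bar 3 4) = cc \<mu> {0,1} 5 + cc \<mu> {0,5} (bar 3 5)"
        by (rule orth_two[OF orth]) (simp_all add: G3 cc_def barv insert_Diff_if)
      then show ?thesis by (simp add: cc_def barv insert_commute)
    qed
    show "\<mu> {0,1,4} + \<mu> {0,4,2} = \<mu> {0,4,2} + \<mu> {0,2,5}"
    proof -
      have "cc \<mu> {0,4} 1 + cc \<mu> {0,2} (bar 3 1) = cc \<mu> {0,4} 2 + cc \<mu> {0,2} (bar 3 2)"
        by (rule orth_two[OF orth]) (simp_all add: G3 cc_def barv insert_Diff_if)
      then show ?thesis by (simp add: cc_def barv insert_commute)
    qed
    show "\<mu> {0,1,4} + \<mu> {0,4,5} = \<mu> {0,4,5} + \<mu> {0,2,5}"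
    proof -
      have "cc \<mu> {0,4} 1 + cc \<mu> {0,5} (bar 3 1) = cc \<mu> {0,4} 5 + cc \<mu> {0,5} (bar 3 5)"
        by (rule orth_two[OF orth]) (simp_all add: G3 cc_def barv insert_Diff_if)
      then show ?thesis by (simp add: cc_def barv insert_commute)
    qed
    show "\<mu> {0,1,2} = \<infinity> \<Longrightarrow> \<mu> {0,1,5} = \<infinity> \<Longrightarrow> \<mu> {0,4,2} = \<infinity> \<Longrightarrow> \<mu> {0,4,5} = \<infinity> \<Longrightarrow> \<mu> {0,1,4} + \<mu> {0,1,4} = \<infinity>"
    proof -
      assume h: "\<mu> {0,1,2} = \<infinity>" "\<mu> {0,1,5} = \<infinity>" "\<mu> {0,4,2} = \<infinity>" "\<mu> {0,4,5} = \<infinity>"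
      have "cc \<mu> {0,1} 4 + cc \<mu> {0,4} (bar 3 4) = \<infinity>"
        by (rule orth_one[OF orth]) (use h in \<open>simp_all add: G3 cc_def barv insert_Diff_if insert_commute\<close>)
      then show ?thesis by (simp add: cc_def barv insert_commute)
    qed
    show "\<mu> {0,1,2} = \<infinity> \<Longrightarrow> \<mu> {0,1,5} = \<infinity> \<Longrightarrow> \<mu> {0,4,2} = \<infinity> \<Longrightarrow> \<mu> {0,4,5} = \<infinity> \<Longrightarrow> \<mu> {0,2,5} + \<mu> {0,2,5} = \<infinity>"
    proof -
      assume h: "\<mu> {0,1,2} = \<infinity>" "\<mu> {0,1,5} = \<infinity>" "\<mu> {0,4,2} = \<infinity>" "\<mu> {0,4,5} = \<infinity>"
      have "cc \<mu> {0,2} 5 + cc \<mu> {0,5} (bar 3 5) = \<infinity>"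
        by (rule orth_one[OF orth]) (use h in \<open>simp_all add: G3 cc_def barv insert_Diff_if insert_commute\<close>)
      then show ?thesis by (simp add: cc_def barv insert_commute)
    qed
  qed
  have Iset: "{i. i < 3 \<and> i \<notin> {0::nat} \<and> bar 3 i \<notin> {0}} = {1,2}" by (auto simp: bar_def)
  show ?thesis unfolding Iset by (rule tm_pair_intro) (use E in \<open>simp_all add: barv insert_commute\<close>)
qed

lemma sp3_1:
  assumes vm: "valuated_matroid 3 3 \<mu>"
    and orth: "\<And>S S'. S \<subseteq> ground 3 \<Longrightarrow> card S + 1 = 3 \<Longrightarrow> S' \<subseteq> ground 3 \<Longrightarrow> card S' + 1 = 3
       \<Longrightarrow> orthogonal 3 (cc \<mu> S) (cc \<mu> S')"
  shows "trop_min2 {i. i < 3 \<and> i \<notin> {1} \<and> bar 3 i \<notin> {1}} (\<lambda>i. \<mu> ({1} \<union> {i, bar 3 i}))"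
proof -
  have E: "\<mu> {1,0,3} = \<mu> {1,2,5}"
  proof (rule core_alg[where xa="\<mu> {1,0,2}" and xb="\<mu> {1,0,5}" and xc="\<mu> {1,3,2}" and xd="\<mu> {1,3,5}"])
    show "\<mu> {1,0,3} \<noteq> -\<infinity>" by (rule vm_nm[OF vm]) (simp_all add: G3)
    show "\<mu> {1,2,5} \<noteq> -\<infinity>" by (rule vm_nm[OF vm]) (simp_all add: G3)
    show "\<mu> {1,0,2} \<noteq> -\<infinity>" by (rule vm_nm[OF vm]) (simp_all add: G3)
    show "\<mu> {1,0,5} \<noteq> -\<infinity>" by (rule vm_nm[OF vm]) (simp_all add: G3)
    show "\<mu> {1,3,2} \<noteq> -\<infinity>" by (rule vm_nm[OF vm]) (simp_all add: G3)
    show "\<mu> {1,3,5} \<noteq> -\<infinity>" by (rule vm_nm[OF vm]) (simp_all add: G3)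
    show "\<mu> {1,0,3} + \<mu> {1,0,2} = \<mu> {1,0,2} + \<mu> {1,2,5}"
    proof -
      have "cc \<mu> {1,0} 3 + cc \<mu> {1,2} (bar 3 3) = cc \<mu> {1,0} 2 + cc \<mu> {1,2} (bar 3 2)"
        by (rule orth_two[OF orth]) (simp_all add: G3 cc_def barv insert_Diff_if)
      then show ?thesis by (simp add: cc_def barv insert_commute)
    qed
    show "\<mu> {1,0,3} + \<mu> {1,0,5} = \<mu> {1,0,5} + \<mu> {1,2,5}"
    proof -
      have "cc \<mu> {1,0} 3 + cc \<mu> {1,5} (bar 3 3) = cc \<mu> {1,0} 5 + cc \<mu> {1,5} (bar 3 5)"
        by (rule orth_two[OF orth]) (simp_all add: G3 cc_def barv insert_Diff_if)
      then show ?thesis by (simp add: cc_def barv insert_commute)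
    qed
    show "\<mu> {1,0,3} + \<mu> {1,3,2} = \<mu> {1,3,2} + \<mu> {1,2,5}"
    proof -
      have "cc \<mu> {1,3} 0 + cc \<mu> {1,2} (bar 3 0) = cc \<mu> {1,3} 2 + cc \<mu> {1,2} (bar 3 2)"
        by (rule orth_two[OF orth]) (simp_all add: G3 cc_def barv insert_Diff_if)
      then show ?thesis by (simp add: cc_def barv insert_commute)
    qed
    show "\<mu> {1,0,3} + \<mu> {1,3,5} = \<mu> {1,3,5} + \<mu> {1,2,5}"
    proof -
      have "cc \<mu> {1,3} 0 + cc \<mu> {1,5} (bar 3 0) = cc \<mu> {1,3} 5 + cc \<mu> {1,5} (bar 3 5)"
        by (rule orth_two[OF orth]) (simp_all add: G3 cc_def barv insert_Diff_if)
      then show ?thesis by (simp add: cc_def barv insert_commute)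
    qed
    show "\<mu> {1,0,2} = \<infinity> \<Longrightarrow> \<mu> {1,0,5} = \<infinity> \<Longrightarrow> \<mu> {1,3,2} = \<infinity> \<Longrightarrow> \<mu> {1,3,5} = \<infinity> \<Longrightarrow> \<mu> {1,0,3} + \<mu> {1,0,3} = \<infinity>"
    proof -
      assume h: "\<mu> {1,0,2} = \<infinity>" "\<mu> {1,0,5} = \<infinity>" "\<mu> {1,3,2} = \<infinity>" "\<mu> {1,3,5} = \<infinity>"
      have "cc \<mu> {1,0} 3 + cc \<mu> {1,3} (bar 3 3) = \<infinity>"
        by (rule orth_one[OF orth]) (use h in \<open>simp_all add: G3 cc_def barv insert_Diff_if insert_commute\<close>)
      then show ?thesis by (simp add: cc_def barv insert_commute)
    qed
    show "\<mu> {1,0,2} = \<infinity> \<Longrightarrow> \<mu> {1,0,5} = \<infinity> \<Longrightarrow> \<mu> {1,3,2} = \<infinity> \<Longrightarrow> \<mu> {1,3,5} = \<infinity> \<Longrightarrow> \<mu> {1,2,5} + \<mu> {1,2,5} = \<infinity>"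
    proof -
      assume h: "\<mu> {1,0,2} = \<infinity>" "\<mu> {1,0,5} = \<infinity>" "\<mu> {1,3,2} = \<infinity>" "\<mu> {1,3,5} = \<infinity>"
      have "cc \<mu> {1,2} 5 + cc \<mu> {1,5} (bar 3 5) = \<infinity>"
        by (rule orth_one[OF orth]) (use h in \<open>simp_all add: G3 cc_def barv insert_Diff_if insert_commute\<close>)
      then show ?thesis by (simp add: cc_def barv insert_commute)
    qed
  qed
  have Iset: "{i. i < 3 \<and> i \<notin> {1::nat} \<and> bar 3 i \<notin> {1}} = {0,2}" by (auto simp: bar_def)
  show ?thesis unfolding Iset by (rule tm_pair_intro) (use E in \<open>simp_all add: barv insert_commute\<close>)
qed

lemma sp3_2:
  assumes vm: "valuated_matroid 3 3 \<mu>"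
    and orth: "\<And>S S'. S \<subseteq> ground 3 \<Longrightarrow> card S + 1 = 3 \<Longrightarrow> S' \<subseteq> ground 3 \<Longrightarrow> card S' + 1 = 3
       \<Longrightarrow> orthogonal 3 (cc \<mu> S) (cc \<mu> S')"
  shows "trop_min2 {i. i < 3 \<and> i \<notin> {2} \<and> bar 3 i \<notin> {2}} (\<lambda>i. \<mu> ({2} \<union> {i, bar 3 i}))"
proof -
  have E: "\<mu> {2,0,3} = \<mu> {2,1,4}"
  proof (rule core_alg[where xa="\<mu> {2,0,1}" and xb="\<mu> {2,0,4}" and xc="\<mu> {2,3,1}" and xd="\<mu> {2,3,4}"])
    show "\<mu> {2,0,3} \<noteq> -\<infinity>" by (rule vm_nm[OF vm]) (simp_all add: G3)
    show "\<mu> {2,1,4} \<noteq> -\<infinity>" by (rule vm_nm[OF vm]) (simp_all add: G3)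
    show "\<mu> {2,0,1} \<noteq> -\<infinity>" by (rule vm_nm[OF vm]) (simp_all add: G3)
    show "\<mu> {2,0,4} \<noteq> -\<infinity>" by (rule vm_nm[OF vm]) (simp_all add: G3)
    show "\<mu> {2,3,1} \<noteq> -\<infinity>" by (rule vm_nm[OF vm]) (simp_all add: G3)
    show "\<mu> {2,3,4} \<noteq> -\<infinity>" by (rule vm_nm[OF vm]) (simp_all add: G3)
    show "\<mu> {2,0,3} + \<mu> {2,0,1} = \<mu> {2,0,1} + \<mu> {2,1,4}"
    proof -
      have "cc \<mu> {2,0} 3 + cc \<mu> {2,1} (bar 3 3) = cc \<mu> {2,0} 1 + cc \<mu> {2,1} (bar 3 1)"
        by (rule orth_two[OF orth]) (simp_all add: G3 cc_def barv insert_Diff_if)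
      then show ?thesis by (simp add: cc_def barv insert_commute)
    qed
    show "\<mu> {2,0,3} + \<mu> {2,0,4} = \<mu> {2,0,4} + \<mu> {2,1,4}"
    proof -
      have "cc \<mu> {2,0} 3 + cc \<mu> {2,4} (bar 3 3) = cc \<mu> {2,0} 4 + cc \<mu> {2,4} (bar 3 4)"
        by (rule orth_two[OF orth]) (simp_all add: G3 cc_def barv insert_Diff_if)
      then show ?thesis by (simp add: cc_def barv insert_commute)
    qed
    show "\<mu> {2,0,3} + \<mu> {2,3,1} = \<mu> {2,3,1} + \<mu> {2,1,4}"
    proof -
      have "cc \<mu> {2,3} 0 + cc \<mu> {2,1} (bar 3 0) = cc \<mu> {2,3} 1 + cc \<mu> {2,1} (bar 3 1)"
        by (rule orth_two[OF orth]) (simp_all add: G3 cc_def barv insert_Diff_if)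
      then show ?thesis by (simp add: cc_def barv insert_commute)
    qed
    show "\<mu> {2,0,3} + \<mu> {2,3,4} = \<mu> {2,3,4} + \<mu> {2,1,4}"
    proof -
      have "cc \<mu> {2,3} 0 + cc \<mu> {2,4} (bar 3 0) = cc \<mu> {2,3} 4 + cc \<mu> {2,4} (bar 3 4)"
        by (rule orth_two[OF orth]) (simp_all add: G3 cc_def barv insert_Diff_if)
      then show ?thesis by (simp add: cc_def barv insert_commute)
    qed
    show "\<mu> {2,0,1} = \<infinity> \<Longrightarrow> \<mu> {2,0,4} = \<infinity> \<Longrightarrow> \<mu> {2,3,1} = \<infinity> \<Longrightarrow> \<mu> {2,3,4} = \<infinity> \<Longrightarrow> \<mu> {2,0,3} + \<mu> {2,0,3} = \<infinity>"
    proof -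
      assume h: "\<mu> {2,0,1} = \<infinity>" "\<mu> {2,0,4} = \<infinity>" "\<mu> {2,3,1} = \<infinity>" "\<mu> {2,3,4} = \<infinity>"
      have "cc \<mu> {2,0} 3 + cc \<mu> {2,3} (bar 3 3) = \<infinity>"
        by (rule orth_one[OF orth]) (use h in \<open>simp_all add: G3 cc_def barv insert_Diff_if insert_commute\<close>)
      then show ?thesis by (simp add: cc_def barv insert_commute)
    qed
    show "\<mu> {2,0,1} = \<infinity> \<Longrightarrow> \<mu> {2,0,4} = \<infinity> \<Longrightarrow> \<mu> {2,3,1} = \<infinity> \<Longrightarrow> \<mu> {2,3,4} = \<infinity> \<Longrightarrow> \<mu> {2,1,4} + \<mu> {2,1,4} = \<infinity>"
    proof -
      assume h: "\<mu> {2,0,1} = \<infinity>" "\<mu> {2,0,4} = \<infinity>" "\<mu> {2,3,1} = \<infinity>" "\<mu> {2,3,4} = \<infinity>"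
      have "cc \<mu> {2,1} 4 + cc \<mu> {2,4} (bar 3 4) = \<infinity>"
        by (rule orth_one[OF orth]) (use h in \<open>simp_all add: G3 cc_def barv insert_Diff_if insert_commute\<close>)
      then show ?thesis by (simp add: cc_def barv insert_commute)
    qed
  qed
  have Iset: "{i. i < 3 \<and> i \<notin> {2::nat} \<and> bar 3 i \<notin> {2}} = {0,1}" by (auto simp: bar_def)
  show ?thesis unfolding Iset by (rule tm_pair_intro) (use E in \<open>simp_all add: barv insert_commute\<close>)
qed

lemma sp3_3:
  assumes vm: "valuated_matroid 3 3 \<mu>"
    and orth: "\<And>S S'. S \<subseteq> ground 3 \<Longrightarrow> card S + 1 = 3 \<Longrightarrow> S' \<subseteq> ground 3 \<Longrightarrow> card S' + 1 = 3
       \<Longrightarrow> orthogonal 3 (cc \<mu> S) (cc \<mu> S')"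
  shows "trop_min2 {i. i < 3 \<and> i \<notin> {3} \<and> bar 3 i \<notin> {3}} (\<lambda>i. \<mu> ({3} \<union> {i, bar 3 i}))"
proof -
  have E: "\<mu> {3,1,4} = \<mu> {3,2,5}"
  proof (rule core_alg[where xa="\<mu> {3,1,2}" and xb="\<mu> {3,1,5}" and xc="\<mu> {3,4,2}" and xd="\<mu> {3,4,5}"])
    show "\<mu> {3,1,4} \<noteq> -\<infinity>" by (rule vm_nm[OF vm]) (simp_all add: G3)
    show "\<mu> {3,2,5} \<noteq> -\<infinity>" by (rule vm_nm[OF vm]) (simp_all add: G3)
    show "\<mu> {3,1,2} \<noteq> -\<infinity>" by (rule vm_nm[OF vm]) (simp_all add: G3)
    show "\<mu> {3,1,5} \<noteq> -\<infinity>" by (rule vm_nm[OF vm]) (simp_all add: G3)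
    show "\<mu> {3,4,2} \<noteq> -\<infinity>" by (rule vm_nm[OF vm]) (simp_all add: G3)
    show "\<mu> {3,4,5} \<noteq> -\<infinity>" by (rule vm_nm[OF vm]) (simp_all add: G3)
    show "\<mu> {3,1,4} + \<mu> {3,1,2} = \<mu> {3,1,2} + \<mu> {3,2,5}"
    proof -
      have "cc \<mu> {3,1} 4 + cc \<mu> {3,2} (bar 3 4) = cc \<mu> {3,1} 2 + cc \<mu> {3,2} (bar 3 2)"
        by (rule orth_two[OF orth]) (simp_all add: G3 cc_def barv insert_Diff_if)
      then show ?thesis by (simp add: cc_def barv insert_commute)
    qed
    show "\<mu> {3,1,4} + \<mu> {3,1,5} = \<mu> {3,1,5} + \<mu> {3,2,5}"
    proof -
      have "cc \<mu> {3,1} 4 + cc \<mu> {3,5} (bar 3 4) = cc \<mu> {3,1} 5 + cc \<mu> {3,5} (bar 3 5)"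
        by (rule orth_two[OF orth]) (simp_all add: G3 cc_def barv insert_Diff_if)
      then show ?thesis by (simp add: cc_def barv insert_commute)
    qed
    show "\<mu> {3,1,4} + \<mu> {3,4,2} = \<mu> {3,4,2} + \<mu> {3,2,5}"
    proof -
      have "cc \<mu> {3,4} 1 + cc \<mu> {3,2} (bar 3 1) = cc \<mu> {3,4} 2 + cc \<mu> {3,2} (bar 3 2)"
        by (rule orth_two[OF orth]) (simp_all add: G3 cc_def barv insert_Diff_if)
      then show ?thesis by (simp add: cc_def barv insert_commute)
    qed
    show "\<mu> {3,1,4} + \<mu> {3,4,5} = \<mu> {3,4,5} + \<mu> {3,2,5}"
    proof -
      have "cc \<mu> {3,4} 1 + cc \<mu> {3,5} (bar 3 1) = cc \<mu> {3,4} 5 + cc \<mu> {3,5} (bar 3 5)"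
        by (rule orth_two[OF orth]) (simp_all add: G3 cc_def barv insert_Diff_if)
      then show ?thesis by (simp add: cc_def barv insert_commute)
    qed
    show "\<mu> {3,1,2} = \<infinity> \<Longrightarrow> \<mu> {3,1,5} = \<infinity> \<Longrightarrow> \<mu> {3,4,2} = \<infinity> \<Longrightarrow> \<mu> {3,4,5} = \<infinity> \<Longrightarrow> \<mu> {3,1,4} + \<mu> {3,1,4} = \<infinity>"
    proof -
      assume h: "\<mu> {3,1,2} = \<infinity>" "\<mu> {3,1,5} = \<infinity>" "\<mu> {3,4,2} = \<infinity>" "\<mu> {3,4,5} = \<infinity>"
      have "cc \<mu> {3,1} 4 + cc \<mu> {3,4} (bar 3 4) = \<infinity>"
        by (rule orth_one[OF orth]) (use h in \<open>simp_all add: G3 cc_def barv insert_Diff_if insert_commute\<close>)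
      then show ?thesis by (simp add: cc_def barv insert_commute)
    qed
    show "\<mu> {3,1,2} = \<infinity> \<Longrightarrow> \<mu> {3,1,5} = \<infinity> \<Longrightarrow> \<mu> {3,4,2} = \<infinity> \<Longrightarrow> \<mu> {3,4,5} = \<infinity> \<Longrightarrow> \<mu> {3,2,5} + \<mu> {3,2,5} = \<infinity>"
    proof -
      assume h: "\<mu> {3,1,2} = \<infinity>" "\<mu> {3,1,5} = \<infinity>" "\<mu> {3,4,2} = \<infinity>" "\<mu> {3,4,5} = \<infinity>"
      have "cc \<mu> {3,2} 5 + cc \<mu> {3,5} (bar 3 5) = \<infinity>"
        by (rule orth_one[OF orth]) (use h in \<open>simp_all add: G3 cc_def barv insert_Diff_if insert_commute\<close>)
      then show ?thesis by (simp add: cc_def barv insert_commute)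
    qed
  qed
  have Iset: "{i. i < 3 \<and> i \<notin> {3::nat} \<and> bar 3 i \<notin> {3}} = {1,2}" by (auto simp: bar_def)
  show ?thesis unfolding Iset by (rule tm_pair_intro) (use E in \<open>simp_all add: barv insert_commute\<close>)
qed

lemma sp3_4:
  assumes vm: "valuated_matroid 3 3 \<mu>"
    and orth: "\<And>S S'. S \<subseteq> ground 3 \<Longrightarrow> card S + 1 = 3 \<Longrightarrow> S' \<subseteq> ground 3 \<Longrightarrow> card S' + 1 = 3
       \<Longrightarrow> orthogonal 3 (cc \<mu> S) (cc \<mu> S')"
  shows "trop_min2 {i. i < 3 \<and> i \<notin> {4} \<and> bar 3 i \<notin> {4}} (\<lambda>i. \<mu> ({4} \<union> {i, bar 3 i}))"
proof -
  have E: "\<mu> {4,0,3} = \<mu> {4,2,5}"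
  proof (rule core_alg[where xa="\<mu> {4,0,2}" and xb="\<mu> {4,0,5}" and xc="\<mu> {4,3,2}" and xd="\<mu> {4,3,5}"])
    show "\<mu> {4,0,3} \<noteq> -\<infinity>" by (rule vm_nm[OF vm]) (simp_all add: G3)
    show "\<mu> {4,2,5} \<noteq> -\<infinity>" by (rule vm_nm[OF vm]) (simp_all add: G3)
    show "\<mu> {4,0,2} \<noteq> -\<infinity>" by (rule vm_nm[OF vm]) (simp_all add: G3)
    show "\<mu> {4,0,5} \<noteq> -\<infinity>" by (rule vm_nm[OF vm]) (simp_all add: G3)
    show "\<mu> {4,3,2} \<noteq> -\<infinity>" by (rule vm_nm[OF vm]) (simp_all add: G3)
    show "\<mu> {4,3,5} \<noteq> -\<infinity>" by (rule vm_nm[OF vm]) (simp_all add: G3)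
    show "\<mu> {4,0,3} + \<mu> {4,0,2} = \<mu> {4,0,2} + \<mu> {4,2,5}"
    proof -
      have "cc \<mu> {4,0} 3 + cc \<mu> {4,2} (bar 3 3) = cc \<mu> {4,0} 2 + cc \<mu> {4,2} (bar 3 2)"
        by (rule orth_two[OF orth]) (simp_all add: G3 cc_def barv insert_Diff_if)
      then show ?thesis by (simp add: cc_def barv insert_commute)
    qed
    show "\<mu> {4,0,3} + \<mu> {4,0,5} = \<mu> {4,0,5} + \<mu> {4,2,5}"
    proof -
      have "cc \<mu> {4,0} 3 + cc \<mu> {4,5} (bar 3 3) = cc \<mu> {4,0} 5 + cc \<mu> {4,5} (bar 3 5)"
        by (rule orth_two[OF orth]) (simp_all add: G3 cc_def barv insert_Diff_if)
      then show ?thesis by (simp add: cc_def barv insert_commute)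
    qed
    show "\<mu> {4,0,3} + \<mu> {4,3,2} = \<mu> {4,3,2} + \<mu> {4,2,5}"
    proof -
      have "cc \<mu> {4,3} 0 + cc \<mu> {4,2} (bar 3 0) = cc \<mu> {4,3} 2 + cc \<mu> {4,2} (bar 3 2)"
        by (rule orth_two[OF orth]) (simp_all add: G3 cc_def barv insert_Diff_if)
      then show ?thesis by (simp add: cc_def barv insert_commute)
    qed
    show "\<mu> {4,0,3} + \<mu> {4,3,5} = \<mu> {4,3,5} + \<mu> {4,2,5}"
    proof -
      have "cc \<mu> {4,3} 0 + cc \<mu> {4,5} (bar 3 0) = cc \<mu> {4,3} 5 + cc \<mu> {4,5} (bar 3 5)"
        by (rule orth_two[OF orth]) (simp_all add: G3 cc_def barv insert_Diff_if)
      then show ?thesis by (simp add: cc_def barv insert_commute)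
    qed
    show "\<mu> {4,0,2} = \<infinity> \<Longrightarrow> \<mu> {4,0,5} = \<infinity> \<Longrightarrow> \<mu> {4,3,2} = \<infinity> \<Longrightarrow> \<mu> {4,3,5} = \<infinity> \<Longrightarrow> \<mu> {4,0,3} + \<mu> {4,0,3} = \<infinity>"
    proof -
      assume h: "\<mu> {4,0,2} = \<infinity>" "\<mu> {4,0,5} = \<infinity>" "\<mu> {4,3,2} = \<infinity>" "\<mu> {4,3,5} = \<infinity>"
      have "cc \<mu> {4,0} 3 + cc \<mu> {4,3} (bar 3 3) = \<infinity>"
        by (rule orth_one[OF orth]) (use h in \<open>simp_all add: G3 cc_def barv insert_Diff_if insert_commute\<close>)
      then show ?thesis by (simp add: cc_def barv insert_commute)
    qed
    show "\<mu> {4,0,2} = \<infinity> \<Longrightarrow> \<mu> {4,0,5} = \<infinity> \<Longrightarrow> \<mu> {4,3,2} = \<infinity> \<Longrightarrow> \<mu> {4,3,5} = \<infinity> \<Longrightarrow> \<mu> {4,2,5} + \<mu> {4,2,5} = \<infinity>"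
    proof -
      assume h: "\<mu> {4,0,2} = \<infinity>" "\<mu> {4,0,5} = \<infinity>" "\<mu> {4,3,2} = \<infinity>" "\<mu> {4,3,5} = \<infinity>"
      have "cc \<mu> {4,2} 5 + cc \<mu> {4,5} (bar 3 5) = \<infinity>"
        by (rule orth_one[OF orth]) (use h in \<open>simp_all add: G3 cc_def barv insert_Diff_if insert_commute\<close>)
      then show ?thesis by (simp add: cc_def barv insert_commute)
    qed
  qed
  have Iset: "{i. i < 3 \<and> i \<notin> {4::nat} \<and> bar 3 i \<notin> {4}} = {0,2}" by (auto simp: bar_def)
  show ?thesis unfolding Iset by (rule tm_pair_intro) (use E in \<open>simp_all add: barv insert_commute\<close>)
qed

lemma sp3_5:
  assumes vm: "valuated_matroid 3 3 \<mu>"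
    and orth: "\<And>S S'. S \<subseteq> ground 3 \<Longrightarrow> card S + 1 = 3 \<Longrightarrow> S' \<subseteq> ground 3 \<Longrightarrow> card S' + 1 = 3
       \<Longrightarrow> orthogonal 3 (cc \<mu> S) (cc \<mu> S')"
  shows "trop_min2 {i. i < 3 \<and> i \<notin> {5} \<and> bar 3 i \<notin> {5}} (\<lambda>i. \<mu> ({5} \<union> {i, bar 3 i}))"
proof -
  have E: "\<mu> {5,0,3} = \<mu> {5,1,4}"
  proof (rule core_alg[where xa="\<mu> {5,0,1}" and xb="\<mu> {5,0,4}" and xc="\<mu> {5,3,1}" and xd="\<mu> {5,3,4}"])
    show "\<mu> {5,0,3} \<noteq> -\<infinity>" by (rule vm_nm[OF vm]) (simp_all add: G3)
    show "\<mu> {5,1,4} \<noteq> -\<infinity>" by (rule vm_nm[OF vm]) (simp_all add: G3)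
    show "\<mu> {5,0,1} \<noteq> -\<infinity>" by (rule vm_nm[OF vm]) (simp_all add: G3)
    show "\<mu> {5,0,4} \<noteq> -\<infinity>" by (rule vm_nm[OF vm]) (simp_all add: G3)
    show "\<mu> {5,3,1} \<noteq> -\<infinity>" by (rule vm_nm[OF vm]) (simp_all add: G3)
    show "\<mu> {5,3,4} \<noteq> -\<infinity>" by (rule vm_nm[OF vm]) (simp_all add: G3)
    show "\<mu> {5,0,3} + \<mu> {5,0,1} = \<mu> {5,0,1} + \<mu> {5,1,4}"
    proof -
      have "cc \<mu> {5,0} 3 + cc \<mu> {5,1} (bar 3 3) = cc \<mu> {5,0} 1 + cc \<mu> {5,1} (bar 3 1)"
        by (rule orth_two[OF orth]) (simp_all add: G3 cc_def barv insert_Diff_if)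
      then show ?thesis by (simp add: cc_def barv insert_commute)
    qed
    show "\<mu> {5,0,3} + \<mu> {5,0,4} = \<mu> {5,0,4} + \<mu> {5,1,4}"
    proof -
      have "cc \<mu> {5,0} 3 + cc \<mu> {5,4} (bar 3 3) = cc \<mu> {5,0} 4 + cc \<mu> {5,4} (bar 3 4)"
        by (rule orth_two[OF orth]) (simp_all add: G3 cc_def barv insert_Diff_if)
      then show ?thesis by (simp add: cc_def barv insert_commute)
    qed
    show "\<mu> {5,0,3} + \<mu> {5,3,1} = \<mu> {5,3,1} + \<mu> {5,1,4}"
    proof -
      have "cc \<mu> {5,3} 0 + cc \<mu> {5,1} (bar 3 0) = cc \<mu> {5,3} 1 + cc \<mu> {5,1} (bar 3 1)"
        by (rule orth_two[OF orth]) (simp_all add: G3 cc_def barv insert_Diff_if)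
      then show ?thesis by (simp add: cc_def barv insert_commute)
    qed
    show "\<mu> {5,0,3} + \<mu> {5,3,4} = \<mu> {5,3,4} + \<mu> {5,1,4}"
    proof -
      have "cc \<mu> {5,3} 0 + cc \<mu> {5,4} (bar 3 0) = cc \<mu> {5,3} 4 + cc \<mu> {5,4} (bar 3 4)"
        by (rule orth_two[OF orth]) (simp_all add: G3 cc_def barv insert_Diff_if)
      then show ?thesis by (simp add: cc_def barv insert_commute)
    qed
    show "\<mu> {5,0,1} = \<infinity> \<Longrightarrow> \<mu> {5,0,4} = \<infinity> \<Longrightarrow> \<mu> {5,3,1} = \<infinity> \<Longrightarrow> \<mu> {5,3,4} = \<infinity> \<Longrightarrow> \<mu> {5,0,3} + \<mu> {5,0,3} = \<infinity>"
    proof -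
      assume h: "\<mu> {5,0,1} = \<infinity>" "\<mu> {5,0,4} = \<infinity>" "\<mu> {5,3,1} = \<infinity>" "\<mu> {5,3,4} = \<infinity>"
      have "cc \<mu> {5,0} 3 + cc \<mu> {5,3} (bar 3 3) = \<infinity>"
        by (rule orth_one[OF orth]) (use h in \<open>simp_all add: G3 cc_def barv insert_Diff_if insert_commute\<close>)
      then show ?thesis by (simp add: cc_def barv insert_commute)
    qed
    show "\<mu> {5,0,1} = \<infinity> \<Longrightarrow> \<mu> {5,0,4} = \<infinity> \<Longrightarrow> \<mu> {5,3,1} = \<infinity> \<Longrightarrow> \<mu> {5,3,4} = \<infinity> \<Longrightarrow> \<mu> {5,1,4} + \<mu> {5,1,4} = \<infinity>"
    proof -
      assume h: "\<mu> {5,0,1} = \<infinity>" "\<mu> {5,0,4} = \<infinity>" "\<mu> {5,3,1} = \<infinity>" "\<mu> {5,3,4} = \<infinity>"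
      have "cc \<mu> {5,1} 4 + cc \<mu> {5,4} (bar 3 4) = \<infinity>"
        by (rule orth_one[OF orth]) (use h in \<open>simp_all add: G3 cc_def barv insert_Diff_if insert_commute\<close>)
      then show ?thesis by (simp add: cc_def barv insert_commute)
    qed
  qed
  have Iset: "{i. i < 3 \<and> i \<notin> {5::nat} \<and> bar 3 i \<notin> {5}} = {0,1}" by (auto simp: bar_def)
  show ?thesis unfolding Iset by (rule tm_pair_intro) (use E in \<open>simp_all add: barv insert_commute\<close>)
qed

lemma mu_sig3:
  assumes spd3: "\<And>s. s \<in> ground 3 \<Longrightarrow> trop_min2 {i'. i' < 3 \<and> i' \<notin> {s} \<and> bar 3 i' \<notin> {s}} (\<lambda>i'. \<mu> ({s} \<union> {i', bar 3 i'}))"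
    and i: "(i::nat) < 3" and s: "s < 6" "s \<noteq> i" "s \<noteq> i + 3"
  shows "\<mu> (ground 3 - bar 3 ` {s, i, i+3}) = \<mu> {s, i, i+3}"
proof -
  have ci: "i = 0 \<or> i = 1 \<or> i = 2" using i by presburger
  have cs: "s = 0 \<or> s = 1 \<or> s = 2 \<or> s = 3 \<or> s = 4 \<or> s = 5" using s by presburger
  have "(i = 0 \<and> s = 1) \<or> (i = 0 \<and> s = 2) \<or> (i = 0 \<and> s = 4) \<or> (i = 0 \<and> s = 5) \<or> (i = 1 \<and> s = 0) \<or> (i = 1 \<and> s = 2) \<or> (i = 1 \<and> s = 3) \<or> (i = 1 \<and> s = 5) \<or> (i = 2 \<and> s = 0) \<or> (i = 2 \<and> s = 1) \<or> (i = 2 \<and> s = 3) \<or> (i = 2 \<and> s = 4)" using ci cs s by auto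
  have f_0_1: "\<mu> (ground 3 - bar 3 ` {1, 0, 0+3}) = \<mu> {1, 0, 0+3}"
  proof -
    have T: "trop_min2 {i'. i' < 3 \<and> i' \<notin> {1} \<and> bar 3 i' \<notin> {1}} (\<lambda>i'. \<mu> ({1} \<union> {i', bar 3 i'}))"
      by (rule spd3) (simp add: ground_def)
    have Iset: "{i'. i' < 3 \<and> i' \<notin> {1} \<and> bar 3 i' \<notin> {1}} = {0,2}" by (auto simp: bar_def)
    have "\<mu> ({1} \<union> {0, bar 3 0}) = \<mu> ({1} \<union> {2, bar 3 2})"
      by (rule tm_pair[OF T[unfolded Iset]]) simp
    then have E: "\<mu> {1,0,3} = \<mu> {1,2,5}" by (simp add: barv insert_commute)
    have Sg: "ground 3 - bar 3 ` {1, 0, 0+3} = {1,2,5}" by (auto simp: bar_def ground_def)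
    show ?thesis using Sg E by (simp add: insert_commute)
  qed
  have f_0_2: "\<mu> (ground 3 - bar 3 ` {2, 0, 0+3}) = \<mu> {2, 0, 0+3}"
  proof -
    have T: "trop_min2 {i'. i' < 3 \<and> i' \<notin> {2} \<and> bar 3 i' \<notin> {2}} (\<lambda>i'. \<mu> ({2} \<union> {i', bar 3 i'}))"
      by (rule spd3) (simp add: ground_def)
    have Iset: "{i'. i' < 3 \<and> i' \<notin> {2} \<and> bar 3 i' \<notin> {2}} = {0,1}" by (auto simp: bar_def)
    have "\<mu> ({2} \<union> {0, bar 3 0}) = \<mu> ({2} \<union> {1, bar 3 1})"
      by (rule tm_pair[OF T[unfolded Iset]]) simp
    then have E: "\<mu> {2,0,3} = \<mu> {2,1,4}" by (simp add: barv insert_commute)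
    have Sg: "ground 3 - bar 3 ` {2, 0, 0+3} = {2,1,4}" by (auto simp: bar_def ground_def)
    show ?thesis using Sg E by (simp add: insert_commute)
  qed
  have f_0_4: "\<mu> (ground 3 - bar 3 ` {4, 0, 0+3}) = \<mu> {4, 0, 0+3}"
  proof -
    have T: "trop_min2 {i'. i' < 3 \<and> i' \<notin> {4} \<and> bar 3 i' \<notin> {4}} (\<lambda>i'. \<mu> ({4} \<union> {i', bar 3 i'}))"
      by (rule spd3) (simp add: ground_def)
    have Iset: "{i'. i' < 3 \<and> i' \<notin> {4} \<and> bar 3 i' \<notin> {4}} = {0,2}" by (auto simp: bar_def)
    have "\<mu> ({4} \<union> {0, bar 3 0}) = \<mu> ({4} \<union> {2, bar 3 2})"
      by (rule tm_pair[OF T[unfolded Iset]]) simp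
    then have E: "\<mu> {4,0,3} = \<mu> {4,2,5}" by (simp add: barv insert_commute)
    have Sg: "ground 3 - bar 3 ` {4, 0, 0+3} = {4,2,5}" by (auto simp: bar_def ground_def)
    show ?thesis using Sg E by (simp add: insert_commute)
  qed
  have f_0_5: "\<mu> (ground 3 - bar 3 ` {5, 0, 0+3}) = \<mu> {5, 0, 0+3}"
  proof -
    have T: "trop_min2 {i'. i' < 3 \<and> i' \<notin> {5} \<and> bar 3 i' \<notin> {5}} (\<lambda>i'. \<mu> ({5} \<union> {i', bar 3 i'}))"
      by (rule spd3) (simp add: ground_def)
    have Iset: "{i'. i' < 3 \<and> i' \<notin> {5} \<and> bar 3 i' \<notin> {5}} = {0,1}" by (auto simp: bar_def)
    have "\<mu> ({5} \<union> {0, bar 3 0}) = \<mu> ({5} \<union> {1, bar 3 1})"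
      by (rule tm_pair[OF T[unfolded Iset]]) simp
    then have E: "\<mu> {5,0,3} = \<mu> {5,1,4}" by (simp add: barv insert_commute)
    have Sg: "ground 3 - bar 3 ` {5, 0, 0+3} = {5,1,4}" by (auto simp: bar_def ground_def)
    show ?thesis using Sg E by (simp add: insert_commute)
  qed
  have f_1_0: "\<mu> (ground 3 - bar 3 ` {0, 1, 1+3}) = \<mu> {0, 1, 1+3}"
  proof -
    have T: "trop_min2 {i'. i' < 3 \<and> i' \<notin> {0} \<and> bar 3 i' \<notin> {0}} (\<lambda>i'. \<mu> ({0} \<union> {i', bar 3 i'}))"
      by (rule spd3) (simp add: ground_def)
    have Iset: "{i'. i' < 3 \<and> i' \<notin> {0} \<and> bar 3 i' \<notin> {0}} = {1,2}" by (auto simp: bar_def)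
    have "\<mu> ({0} \<union> {1, bar 3 1}) = \<mu> ({0} \<union> {2, bar 3 2})"
      by (rule tm_pair[OF T[unfolded Iset]]) simp
    then have E: "\<mu> {0,1,4} = \<mu> {0,2,5}" by (simp add: barv insert_commute)
    have Sg: "ground 3 - bar 3 ` {0, 1, 1+3} = {0,2,5}" by (auto simp: bar_def ground_def)
    show ?thesis using Sg E by (simp add: insert_commute)
  qed
  have f_1_2: "\<mu> (ground 3 - bar 3 ` {2, 1, 1+3}) = \<mu> {2, 1, 1+3}"
  proof -
    have T: "trop_min2 {i'. i' < 3 \<and> i' \<notin> {2} \<and> bar 3 i' \<notin> {2}} (\<lambda>i'. \<mu> ({2} \<union> {i', bar 3 i'}))"
      by (rule spd3) (simp add: ground_def)
    have Iset: "{i'. i' < 3 \<and> i' \<notin> {2} \<and> bar 3 i' \<notin> {2}} = {0,1}" by (auto simp: bar_def)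
    have "\<mu> ({2} \<union> {0, bar 3 0}) = \<mu> ({2} \<union> {1, bar 3 1})"
      by (rule tm_pair[OF T[unfolded Iset]]) simp
    then have E: "\<mu> {2,0,3} = \<mu> {2,1,4}" by (simp add: barv insert_commute)
    have Sg: "ground 3 - bar 3 ` {2, 1, 1+3} = {2,0,3}" by (auto simp: bar_def ground_def)
    show ?thesis using Sg E by (simp add: insert_commute)
  qed
  have f_1_3: "\<mu> (ground 3 - bar 3 ` {3, 1, 1+3}) = \<mu> {3, 1, 1+3}"
  proof -
    have T: "trop_min2 {i'. i' < 3 \<and> i' \<notin> {3} \<and> bar 3 i' \<notin> {3}} (\<lambda>i'. \<mu> ({3} \<union> {i', bar 3 i'}))"
      by (rule spd3) (simp add: ground_def)
    have Iset: "{i'. i' < 3 \<and> i' \<notin> {3} \<and> bar 3 i' \<notin> {3}} = {1,2}" by (auto simp: bar_def)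
    have "\<mu> ({3} \<union> {1, bar 3 1}) = \<mu> ({3} \<union> {2, bar 3 2})"
      by (rule tm_pair[OF T[unfolded Iset]]) simp
    then have E: "\<mu> {3,1,4} = \<mu> {3,2,5}" by (simp add: barv insert_commute)
    have Sg: "ground 3 - bar 3 ` {3, 1, 1+3} = {3,2,5}" by (auto simp: bar_def ground_def)
    show ?thesis using Sg E by (simp add: insert_commute)
  qed
  have f_1_5: "\<mu> (ground 3 - bar 3 ` {5, 1, 1+3}) = \<mu> {5, 1, 1+3}"
  proof -
    have T: "trop_min2 {i'. i' < 3 \<and> i' \<notin> {5} \<and> bar 3 i' \<notin> {5}} (\<lambda>i'. \<mu> ({5} \<union> {i', bar 3 i'}))"
      by (rule spd3) (simp add: ground_def)
    have Iset: "{i'. i' < 3 \<and> i' \<notin> {5} \<and> bar 3 i' \<notin> {5}} = {0,1}" by (auto simp: bar_def)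
    have "\<mu> ({5} \<union> {0, bar 3 0}) = \<mu> ({5} \<union> {1, bar 3 1})"
      by (rule tm_pair[OF T[unfolded Iset]]) simp
    then have E: "\<mu> {5,0,3} = \<mu> {5,1,4}" by (simp add: barv insert_commute)
    have Sg: "ground 3 - bar 3 ` {5, 1, 1+3} = {5,0,3}" by (auto simp: bar_def ground_def)
    show ?thesis using Sg E by (simp add: insert_commute)
  qed
  have f_2_0: "\<mu> (ground 3 - bar 3 ` {0, 2, 2+3}) = \<mu> {0, 2, 2+3}"
  proof -
    have T: "trop_min2 {i'. i' < 3 \<and> i' \<notin> {0} \<and> bar 3 i' \<notin> {0}} (\<lambda>i'. \<mu> ({0} \<union> {i', bar 3 i'}))"
      by (rule spd3) (simp add: ground_def)
    have Iset: "{i'. i' < 3 \<and> i' \<notin> {0} \<and> bar 3 i' \<notin> {0}} = {1,2}" by (auto simp: bar_def)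
    have "\<mu> ({0} \<union> {1, bar 3 1}) = \<mu> ({0} \<union> {2, bar 3 2})"
      by (rule tm_pair[OF T[unfolded Iset]]) simp
    then have E: "\<mu> {0,1,4} = \<mu> {0,2,5}" by (simp add: barv insert_commute)
    have Sg: "ground 3 - bar 3 ` {0, 2, 2+3} = {0,1,4}" by (auto simp: bar_def ground_def)
    show ?thesis using Sg E by (simp add: insert_commute)
  qed
  have f_2_1: "\<mu> (ground 3 - bar 3 ` {1, 2, 2+3}) = \<mu> {1, 2, 2+3}"
  proof -
    have T: "trop_min2 {i'. i' < 3 \<and> i' \<notin> {1} \<and> bar 3 i' \<notin> {1}} (\<lambda>i'. \<mu> ({1} \<union> {i', bar 3 i'}))"
      by (rule spd3) (simp add: ground_def)
    have Iset: "{i'. i' < 3 \<and> i' \<notin> {1} \<and> bar 3 i' \<notin> {1}} = {0,2}" by (auto simp: bar_def)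
    have "\<mu> ({1} \<union> {0, bar 3 0}) = \<mu> ({1} \<union> {2, bar 3 2})"
      by (rule tm_pair[OF T[unfolded Iset]]) simp
    then have E: "\<mu> {1,0,3} = \<mu> {1,2,5}" by (simp add: barv insert_commute)
    have Sg: "ground 3 - bar 3 ` {1, 2, 2+3} = {1,0,3}" by (auto simp: bar_def ground_def)
    show ?thesis using Sg E by (simp add: insert_commute)
  qed
  have f_2_3: "\<mu> (ground 3 - bar 3 ` {3, 2, 2+3}) = \<mu> {3, 2, 2+3}"
  proof -
    have T: "trop_min2 {i'. i' < 3 \<and> i' \<notin> {3} \<and> bar 3 i' \<notin> {3}} (\<lambda>i'. \<mu> ({3} \<union> {i', bar 3 i'}))"
      by (rule spd3) (simp add: ground_def)
    have Iset: "{i'. i' < 3 \<and> i' \<notin> {3} \<and> bar 3 i' \<notin> {3}} = {1,2}" by (auto simp: bar_def)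
    have "\<mu> ({3} \<union> {1, bar 3 1}) = \<mu> ({3} \<union> {2, bar 3 2})"
      by (rule tm_pair[OF T[unfolded Iset]]) simp
    then have E: "\<mu> {3,1,4} = \<mu> {3,2,5}" by (simp add: barv insert_commute)
    have Sg: "ground 3 - bar 3 ` {3, 2, 2+3} = {3,1,4}" by (auto simp: bar_def ground_def)
    show ?thesis using Sg E by (simp add: insert_commute)
  qed
  have f_2_4: "\<mu> (ground 3 - bar 3 ` {4, 2, 2+3}) = \<mu> {4, 2, 2+3}"
  proof -
    have T: "trop_min2 {i'. i' < 3 \<and> i' \<notin> {4} \<and> bar 3 i' \<notin> {4}} (\<lambda>i'. \<mu> ({4} \<union> {i', bar 3 i'}))"
      by (rule spd3) (simp add: ground_def)
    have Iset: "{i'. i' < 3 \<and> i' \<notin> {4} \<and> bar 3 i' \<notin> {4}} = {0,2}" by (auto simp: bar_def)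
    have "\<mu> ({4} \<union> {0, bar 3 0}) = \<mu> ({4} \<union> {2, bar 3 2})"
      by (rule tm_pair[OF T[unfolded Iset]]) simp
    then have E: "\<mu> {4,0,3} = \<mu> {4,2,5}" by (simp add: barv insert_commute)
    have Sg: "ground 3 - bar 3 ` {4, 2, 2+3} = {4,0,3}" by (auto simp: bar_def ground_def)
    show ?thesis using Sg E by (simp add: insert_commute)
  qed
  show ?thesis using \<open>(i = 0 \<and> s = 1) \<or> (i = 0 \<and> s = 2) \<or> (i = 0 \<and> s = 4) \<or> (i = 0 \<and> s = 5) \<or> (i = 1 \<and> s = 0) \<or> (i = 1 \<and> s = 2) \<or> (i = 1 \<and> s = 3) \<or> (i = 1 \<and> s = 5) \<or> (i = 2 \<and> s = 0) \<or> (i = 2 \<and> s = 1) \<or> (i = 2 \<and> s = 3) \<or> (i = 2 \<and> s = 4)\<close> by (elim disjE conjE) (simp_all only: f_0_1 f_0_2 f_0_4 f_0_5 f_1_0 f_1_2 f_1_3 f_1_5 f_2_0 f_2_1 f_2_3 f_2_4)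
qed


lemma mu_sig:
  assumes n3: "n \<le> 3"
    and spd: "\<forall>S. S \<subseteq> ground n \<and> card S + 2 = n \<longrightarrow>
        trop_min2 {i. i < n \<and> i \<notin> S \<and> bar n i \<notin> S} (\<lambda>i. \<mu> (S \<union> {i, bar n i}))"
    and B: "B \<subseteq> ground n" "card B = n"
  shows "\<mu> (ground n - bar n ` B) = \<mu> B"
proof (cases "\<exists>i<n. i \<in> B \<and> i + n \<in> B")
  case False then show ?thesis using lag[OF B] by auto
next
  case True
  then obtain i where i: "i < n" "i \<in> B" "i + n \<in> B" by blast
  have fB: "finite B" using B(1) by (rule fin_sub)
  have sub: "{i, i+n} \<subseteq> B" using i by auto
  have c2: "card {i, i+n} = 2" using i by auto
  have "2 \<le> n" using card_mono[OF fB sub] c2 B(2) by simp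
  then have "n = 2 \<or> n = 3" using n3 by auto
  then show ?thesis
  proof
    assume n2: "n = 2"
    have "{i, i+n} = B" by (rule card_subset_eq[OF fB sub]) (simp add: c2 B(2) n2)
    then have Beq: "B = {i, i+2}" using n2 by simp
    have T: "trop_min2 {i'. i' < 2 \<and> i' \<notin> {} \<and> bar 2 i' \<notin> {}} (\<lambda>i'. \<mu> ({} \<union> {i', bar 2 i'}))"
      using spd[unfolded n2, rule_format, of "{}"] by simp
    have Iset: "{i'. i' < 2 \<and> i' \<notin> {} \<and> bar 2 i' \<notin> {}} = {0::nat,1}" by (auto simp: bar_def)
    have E: "\<mu> {0,2} = \<mu> {1,3}" using tm_pair[OF T[unfolded Iset]] by (simp add: barv)
    have "i = 0 \<or> i = 1" using i n2 by auto
    then show ?thesis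
    proof
      assume "i = 0"
      then have "B = {0,2}" using \<open>{i, i+n} = B\<close> n2 by (simp add: numeral_2_eq_2)
      moreover have "ground 2 - bar 2 ` {0,2} = {1,3}" by (auto simp: ground_def bar_def)
      ultimately show ?thesis using E n2 by simp
    next
      assume "i = 1"
      then have "B = {1,3}" using \<open>{i, i+n} = B\<close> n2 by (simp add: numeral_2_eq_2 numeral_3_eq_3)
      moreover have "ground 2 - bar 2 ` {1,3} = {0,2}" by (auto simp: ground_def bar_def)
      ultimately show ?thesis using E n2 by simp
    qed
  next
    assume n3': "n = 3"
    have "card (B - {i, i+n}) = 1" using card_Diff_subset[OF _ sub] c2 B(2) n3' by simp
    then obtain s where s: "B - {i, i+n} = {s}" by (rule card_1_singletonE)
    have Bs: "B = {s, i, i+3}" using s sub n3' by auto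
    have sB: "s \<in> B" "s \<noteq> i" "s \<noteq> i + 3" using s n3' by auto
    have s6: "s < 6" using sB(1) B(1) n3' by (auto simp: ground_def)
    have spd3: "trop_min2 {i'. i' < 3 \<and> i' \<notin> {t} \<and> bar 3 i' \<notin> {t}} (\<lambda>i'. \<mu> ({t} \<union> {i', bar 3 i'}))"
      if "t \<in> ground 3" for t
    proof -
      have "{t} \<subseteq> ground 3 \<and> card {t} + 2 = 3" using that by simp
      then show ?thesis using spd unfolding n3' by blast
    qed
    have "\<mu> (ground 3 - bar 3 ` {s, i, i+3}) = \<mu> {s, i, i+3}"
      by (rule mu_sig3[OF spd3]) (use i n3' sB s6 in auto)
    then show ?thesis using Bs n3' by simp
  qed
qed

lemma orth_of_sp:
  assumes vm: "valuated_matroid n n \<mu>"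
    and msig: "\<And>B. B \<subseteq> ground n \<Longrightarrow> card B = n \<Longrightarrow> \<mu> (ground n - bar n ` B) = \<mu> B"
    and S: "S \<subseteq> ground n" "card S + 1 = n" and S': "S' \<subseteq> ground n" "card S' + 1 = n"
  shows "orthogonal n (cc \<mu> S) (cc \<mu> S')"
proof -
  define R where "R = ground n - bar n ` S'"
  have fS': "finite S'" using S'(1) by (rule fin_sub)
  have bS': "bar n ` S' \<subseteq> ground n" using S'(1) bar_ground by blast
  have cbS': "card (bar n ` S') = card S'"
    using card_image[OF inj_on_subset[OF bar_inj S'(1)]] .
  have cR: "card R = n + 1"
    unfolding R_def using card_Diff_subset[OF finite_subset[OF bS' finite_ground] bS'] cbS' S'(2) by simp
  have Rg: "R \<subseteq> ground n" unfolding R_def by blast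
  have pl: "trop_min2 (R - S) (\<lambda>j. \<mu> (R - {j}) + \<mu> (insert j S))"
    by (rule vm_pl[OF vm S Rg cR])
  show ?thesis unfolding orthogonal_def
  proof (rule tm_ext[OF pl])
    show "R - S \<subseteq> ground n" using Rg by blast
    show "\<forall>j\<in>R - S. cc \<mu> S j + cc \<mu> S' (bar n j) = \<mu> (R - {j}) + \<mu> (insert j S)"
    proof
      fix j assume j: "j \<in> R - S"
      have jg: "j \<in> ground n" using j Rg by blast
      have bj: "bar n j \<in> ground n" using bar_ground[OF jg] .
      have bjS': "bar n j \<notin> S'"
      proof
        assume "bar n j \<in> S'"
        then have "bar n (bar n j) \<in> bar n ` S'" by blast
        then show False using j bar_bar[OF jg] unfolding R_def by simp
      qed
      have ins: "insert (bar n j) S' \<subseteq> ground n" "card (insert (bar n j) S') = n"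
        using bj S' bjS' fS' by auto
      have img: "bar n ` insert (bar n j) S' = insert j (bar n ` S')" using bar_bar[OF jg] by simp
      have "cc \<mu> S' (bar n j) = \<mu> (insert (bar n j) S')" using bjS' by (simp add: cc_def)
      also have "\<dots> = \<mu> (ground n - bar n ` insert (bar n j) S')" using msig[OF ins] by simp
      also have "ground n - bar n ` insert (bar n j) S' = R - {j}" unfolding img R_def by blast
      finally have 1: "cc \<mu> S' (bar n j) = \<mu> (R - {j})" .
      have 2: "cc \<mu> S j = \<mu> (insert j S)" using j by (simp add: cc_def)
      show "cc \<mu> S j + cc \<mu> S' (bar n j) = \<mu> (R - {j}) + \<mu> (insert j S)"
        unfolding 1 2 by (rule add.commute)
    qed
    show "\<forall>j\<in>ground n - (R - S). cc \<mu> S j + cc \<mu> S' (bar n j) = \<infinity>"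
    proof
      fix j assume j: "j \<in> ground n - (R - S)"
      show "cc \<mu> S j + cc \<mu> S' (bar n j) = \<infinity>"
      proof (cases "j \<in> S")
        case True then show ?thesis by (simp add: cc_def)
      next
        case False
        then have "j \<in> bar n ` S'" using j unfolding R_def by blast
        then obtain b where b: "b \<in> S'" "j = bar n b" by blast
        have "bar n j = b" using b bar_bar S'(1) by blast
        then have "cc \<mu> S' (bar n j) = \<infinity>" using b by (simp add: cc_def)
        then show ?thesis by simp
      qed
    qed
  qed
qed

lemma sp_of_orth:
  assumes n3: "n \<le> 3" and vm: "valuated_matroid n n \<mu>"
    and orth: "\<And>S S'. S \<subseteq> ground n \<Longrightarrow> card S + 1 = n \<Longrightarrow> S' \<subseteq> ground n \<Longrightarrow> card S' + 1 = n
       \<Longrightarrow> orthogonal n (cc \<mu> S) (cc \<mu> S')"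
  shows "\<forall>S. S \<subseteq> ground n \<and> card S + 2 = n \<longrightarrow>
        trop_min2 {i. i < n \<and> i \<notin> S \<and> bar n i \<notin> S} (\<lambda>i. \<mu> (S \<union> {i, bar n i}))"
proof (intro allI impI)
  fix S assume S: "S \<subseteq> ground n \<and> card S + 2 = n"
  have fS: "finite S" using S by (intro fin_sub) blast
  have "n = 2 \<or> n = 3" using S n3 by auto
  then show "trop_min2 {i. i < n \<and> i \<notin> S \<and> bar n i \<notin> S} (\<lambda>i. \<mu> (S \<union> {i, bar n i}))"
  proof
    assume n2: "n = 2"
    have "S = {}" using S fS n2 by auto
    then show ?thesis unfolding n2 by (simp only:) (rule sp2[OF vm[unfolded n2] orth[unfolded n2]])
  next
    assume n3': "n = 3"
    have "card S = 1" using S n3' by simp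
    then obtain s where s: "S = {s}" by (rule card_1_singletonE)
    have "s < 6" using S s n3' by (auto simp: ground_def)
    then have "s = 0 \<or> s = 1 \<or> s = 2 \<or> s = 3 \<or> s = 4 \<or> s = 5" by presburger
    then show ?thesis
    proof (elim disjE)
      assume "s = 0" then show ?thesis unfolding n3' s by (simp only:) (rule sp3_0[OF vm[unfolded n3'] orth[unfolded n3']])
    next
      assume "s = 1" then show ?thesis unfolding n3' s by (simp only:) (rule sp3_1[OF vm[unfolded n3'] orth[unfolded n3']])
    next
      assume "s = 2" then show ?thesis unfolding n3' s by (simp only:) (rule sp3_2[OF vm[unfolded n3'] orth[unfolded n3']])
    next
      assume "s = 3" then show ?thesis unfolding n3' s by (simp only:) (rule sp3_3[OF vm[unfolded n3'] orth[unfolded n3']])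
    next
      assume "s = 4" then show ?thesis unfolding n3' s by (simp only:) (rule sp3_4[OF vm[unfolded n3'] orth[unfolded n3']])
    next
      assume "s = 5" then show ?thesis unfolding n3' s by (simp only:) (rule sp3_5[OF vm[unfolded n3'] orth[unfolded n3']])
    qed
  qed
qed

theorem proposition4p12:
  fixes n :: nat and \<mu> :: "nat set \<Rightarrow> ereal"
  assumes "n \<le> 3" and "valuated_matroid n n \<mu>"
  shows "isotropic n (Lmu n n \<mu>) \<longleftrightarrow> \<mu> \<in> SpDr n n"
proof
  assume iso: "isotropic n (Lmu n n \<mu>)"
  have "\<forall>S. S \<subseteq> ground n \<and> card S + 2 = n \<longrightarrow>
        trop_min2 {i. i < n \<and> i \<notin> S \<and> bar n i \<notin> S} (\<lambda>i. \<mu> (S \<union> {i, bar n i}))"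
    by (rule sp_of_orth[OF assms(1,2)]) (rule cc_of_iso[OF assms(2) iso])
  then show "\<mu> \<in> SpDr n n" unfolding SpDr_def using assms(2) by blast
next
  assume "\<mu> \<in> SpDr n n"
  then have spd: "\<forall>S. S \<subseteq> ground n \<and> card S + 2 = n \<longrightarrow>
        trop_min2 {i. i < n \<and> i \<notin> S \<and> bar n i \<notin> S} (\<lambda>i. \<mu> (S \<union> {i, bar n i}))"
    unfolding SpDr_def by blast
  show "isotropic n (Lmu n n \<mu>)"
    by (rule iso_of_cc[OF assms(2)]) (rule orth_of_sp[OF assms(2) mu_sig[OF assms(1) spd]])
qed

end
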